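(* Let $R$ be a reflexive relation on a set $U$ such that $\mathrm{DM(RS)}$ is completely distributive and spatial. The following are equivalent: (i) $\mathrm{DM(RS)}$ forms a Nelson algebra (with the operations described in the context); (ii) for all $x,y\in U\setminus\mathcal S$ such that $\{x\}^{\blacktriangle}$ and $\{y\}^{\blacktriangle}$ are completely join-irreducible in $\wp(U)^{\blacktriangle}$: if $\{x\}^{\blacktriangle},\{y\}^{\blacktriangle}\subseteq\{u\}^{\blacktriangle}$ for some $u\in U$, then there exists $z\in U$ such that $\{z\}^{\blacktriangle}$ is completely join-irreducible in $\wp(U)^{\blacktriangle}$ and $\{x\}^{\blacktriangle},\{y\}^{\blacktriangle}\subseteq\{z\}^{\blacktriangle}$.
   Context: Let $U$ be a set and $R\subseteq U\times U$ a binary relation. For $x\in U$, $R(x)=\{y\in U\mid (x,y)\in R\}$ and $\breve R(x)=\{y\in U\mid (y,x)\in R\}$ ($\breve R$ is the inverse relation). For $X\subseteq U$: $X^{\blacktriangledown}=\{x\in U\mid R(x)\subseteq X\}$, $X^{\blacktriangle}=\{x\in U\mid R(x)\cap X\neq\emptyset\}$, $X^{\triangledown}=\{x\in U\mid \breve R(x)\subseteq X\}$, $X^{\vartriangle}=\{x\in U\mid \breve R(x)\cap X\neq\emptyset\}$; thus $\{x\}^{\vartriangle}=R(x)$ and $\{x\}^{\blacktriangle}=\breve R(x)$, and composites such as $X^{\vartriangle\blacktriangledown}$ mean $(X^{\vartriangle})^{\blacktriangledown}$. Put $\wp(U)^{\blacktriangledown}=\{X^{\blacktriangledown}\mid X\subseteq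 U\}$ and similarly $\wp(U)^{\blacktriangle},\wp(U)^{\triangledown},\wp(U)^{\vartriangle}$; each is a complete lattice under $\subseteq$ (in $\wp(U)^{\blacktriangle}$ and $\wp(U)^{\vartriangle}$ joins are unions). The set of singletons is $\mathcal S=\{x\in U\mid |R(x)|=1\}$. $\mathrm{RS}=\{(X^{\blacktriangledown},X^{\blacktriangle})\mid X\subseteq U\}$ is ordered coordinatewise by inclusion, and $\mathrm{DM(RS)}$ is its Dedekind–MacNeille completion, which is (identified with) $\{(A,B)\in\wp(U)^{\blacktriangledown}\times\wp(U)^{\blacktriangle}\mid A^{\vartriangle\blacktriangle}\subseteq B,\ A\cap\mathcal S=B\cap\mathcal S\}$ ordered coordinatewise, with arbitrary meets $\bigwedge_i(X_i,Y_i)=(\bigcap_iX_i,(\bigcap_iY_i)^{\triangledown\blacktriangle})$ and joins $\bigvee_i(X_i,Y_i)=((\bigcup_iX_i)^{\vartriangle\blacktriangledown},\bigcup_iY_i)$. An element $j$ of a complete lattice $L$ is completely join-irreducible if $j=\bigvee S$ implies $j\in S$ for all $S\subseteq L$ (the least element is not completely join-irreducible). $L$ is spatial if each element is the join of the completely join-irreducible elements below it. For reflexive $R$ with $\mathrm{DM(RS)}$ distributive, $\mathrm{DM(RS)}$ is a Kleene algebra with $\sim(A,B)=(B^c,A^c)$ ($^c$ = complement in $U$), bottom $(\emptyset,\emptyset)$ and top $(U,U)$. A Kleene algebra is a bounded distributive lattice with an operation $\sim$ satisfying $\sim\sim x=x$, $\sim(x\vee y)=\sim x\wedge\sim y$,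 $\sim(x\wedge y)=\sim x\vee\sim y$ and $x\wedge\sim x\le y\vee\sim y$. A Nelson algebra is a Kleene algebra in which for all $a,b$ the element $a\to b:=a\Rightarrow(\sim a\vee b)$ exists ($\Rightarrow$ the relative pseudocomplement: $a\Rightarrow c$ is the greatest $x$ with $a\wedge x\le c$) and $(a\wedge b)\to c=a\to(b\to c)$ for all $a,b,c$. "$\mathrm{DM(RS)}$ forms a Nelson algebra" means that the Kleene algebra $(\mathrm{DM(RS)},\vee,\wedge,\sim,(\emptyset,\emptyset),(U,U))$ with this $\to$ is a Nelson algebra. *)

theory Defs
  imports Main
begin

definition is_lub :: "'b set \<Rightarrow> ('b \<Rightarrow> 'b \<Rightarrow> bool) \<Rightarrow> 'b set \<Rightarrow> 'b \<Rightarrow> bool" where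
  "is_lub L le A x \<longleftrightarrow> x \<in> L \<and> (\<forall>a\<in>A. le a x) \<and> (\<forall>y\<in>L. (\<forall>a\<in>A. le a y) \<longrightarrow> le x y)"

definition is_glb :: "'b set \<Rightarrow> ('b \<Rightarrow> 'b \<Rightarrow> bool) \<Rightarrow> 'b set \<Rightarrow> 'b \<Rightarrow> bool" where
  "is_glb L le A x \<longleftrightarrow> x \<in> L \<and> (\<forall>a\<in>A. le x a) \<and> (\<forall>y\<in>L. (\<forall>a\<in>A. le y a) \<longrightarrow> le y x)"

definition lsup :: "'b set \<Rightarrow> ('b \<Rightarrow> 'b \<Rightarrow> bool) \<Rightarrow> 'b set \<Rightarrow> 'b" where
  "lsup L le A = (THE x. is_lub L le A x)"

definition linf :: "'b set \<Rightarrow> ('b \<Rightarrow> 'b \<Rightarrow> bool) \<Rightarrow> 'b set \<Rightarrow> 'b" where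
  "linf L le A = (THE x. is_glb L le A x)"

definition ljoin :: "'b set \<Rightarrow> ('b \<Rightarrow> 'b \<Rightarrow> bool) \<Rightarrow> 'b \<Rightarrow> 'b \<Rightarrow> 'b" where
  "ljoin L le a b = lsup L le {a, b}"

definition lmeet :: "'b set \<Rightarrow> ('b \<Rightarrow> 'b \<Rightarrow> bool) \<Rightarrow> 'b \<Rightarrow> 'b \<Rightarrow> 'b" where
  "lmeet L le a b = linf L le {a, b}"

text \<open>Completely join-irreducible: j = \<Or>S implies j \<in> S (the least element,
  being the join of the empty set, is excluded automatically).\<close>
definition completely_join_irreducible :: "'b set \<Rightarrow> ('b \<Rightarrow> 'b \<Rightarrow> bool) \<Rightarrow> 'b \<Rightarrow> bool" where
  "completely_join_irreducible L le j \<longleftrightarrow>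
     j \<in> L \<and> (\<forall>S. S \<subseteq> L \<longrightarrow> is_lub L le S j \<longrightarrow> j \<in> S)"

definition spatial :: "'b set \<Rightarrow> ('b \<Rightarrow> 'b \<Rightarrow> bool) \<Rightarrow> bool" where
  "spatial L le \<longleftrightarrow>
     (\<forall>x\<in>L. is_lub L le {j \<in> L. completely_join_irreducible L le j \<and> le j x} x)"

definition completely_distributive :: "'b set \<Rightarrow> ('b \<Rightarrow> 'b \<Rightarrow> bool) \<Rightarrow> bool" where
  "completely_distributive L le \<longleftrightarrow>
     (\<forall>\<A>. \<A> \<subseteq> Pow L \<longrightarrow>
        linf L le ((\<lambda>A. lsup L le A) ` \<A>) =
        lsup L le {linf L le (f ` \<A>) | f. \<forall>A\<in>\<A>. f A \<in> A})"

definition is_rpc :: "'b set \<Rightarrow> ('b \<Rightarrow> 'b \<Rightarrow> bool) \<Rightarrow> 'b \<Rightarrow> 'b \<Rightarrow> 'b \<Rightarrow> bool" where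
  "is_rpc L le a c x \<longleftrightarrow> x \<in> L \<and> le (lmeet L le a x) c \<and>
     (\<forall>y\<in>L. le (lmeet L le a y) c \<longrightarrow> le y x)"

definition rpc :: "'b set \<Rightarrow> ('b \<Rightarrow> 'b \<Rightarrow> bool) \<Rightarrow> 'b \<Rightarrow> 'b \<Rightarrow> 'b" where
  "rpc L le a c = (THE x. is_rpc L le a c x)"

definition kleene_algebra ::
  "'b set \<Rightarrow> ('b \<Rightarrow> 'b \<Rightarrow> bool) \<Rightarrow> ('b \<Rightarrow> 'b) \<Rightarrow> 'b \<Rightarrow> 'b \<Rightarrow> bool" where
  "kleene_algebra L le neg bt tp \<longleftrightarrow>
     (\<forall>a\<in>L. le a a) \<and>
     (\<forall>a\<in>L. \<forall>b\<in>L. le a b \<and> le b a \<longrightarrow> a = b) \<and>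
     (\<forall>a\<in>L. \<forall>b\<in>L. \<forall>c\<in>L. le a b \<and> le b c \<longrightarrow> le a c) \<and>
     (\<forall>a\<in>L. \<forall>b\<in>L. (\<exists>x. is_lub L le {a, b} x) \<and> (\<exists>x. is_glb L le {a, b} x)) \<and>
     bt \<in> L \<and> tp \<in> L \<and> (\<forall>a\<in>L. le bt a \<and> le a tp) \<and>
     (\<forall>a\<in>L. \<forall>b\<in>L. \<forall>c\<in>L.
        lmeet L le a (ljoin L le b c) = ljoin L le (lmeet L le a b) (lmeet L le a c)) \<and>
     (\<forall>a\<in>L. neg a \<in> L \<and> neg (neg a) = a) \<and>
     (\<forall>a\<in>L. \<forall>b\<in>L. neg (ljoin L le a b) = lmeet L le (neg a) (neg b)) \<and>
     (\<forall>a\<in>L. \<forall>b\<in>L. neg (lmeet L le a b) = ljoin L le (neg a) (neg b)) \<and>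
     (\<forall>a\<in>L. \<forall>b\<in>L. le (lmeet L le a (neg a)) (ljoin L le b (neg b)))"

definition nelson_imp ::
  "'b set \<Rightarrow> ('b \<Rightarrow> 'b \<Rightarrow> bool) \<Rightarrow> ('b \<Rightarrow> 'b) \<Rightarrow> 'b \<Rightarrow> 'b \<Rightarrow> 'b" where
  "nelson_imp L le neg a b = rpc L le a (ljoin L le (neg a) b)"

definition nelson_algebra ::
  "'b set \<Rightarrow> ('b \<Rightarrow> 'b \<Rightarrow> bool) \<Rightarrow> ('b \<Rightarrow> 'b) \<Rightarrow> 'b \<Rightarrow> 'b \<Rightarrow> bool" where
  "nelson_algebra L le neg bt tp \<longleftrightarrow>
     kleene_algebra L le neg bt tp \<and>
     (\<forall>a\<in>L. \<forall>b\<in>L. \<exists>x. is_rpc L le a (ljoin L le (neg a) b) x) \<and>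
     (\<forall>a\<in>L. \<forall>b\<in>L. \<forall>c\<in>L.
        nelson_imp L le neg (lmeet L le a b) c = nelson_imp L le neg a (nelson_imp L le neg b c))"

definition Rimg :: "'a set \<Rightarrow> ('a \<times> 'a) set \<Rightarrow> 'a \<Rightarrow> 'a set" where
  "Rimg U R x = {y \<in> U. (x, y) \<in> R}"

definition Rinv :: "'a set \<Rightarrow> ('a \<times> 'a) set \<Rightarrow> 'a \<Rightarrow> 'a set" where
  "Rinv U R x = {y \<in> U. (y, x) \<in> R}"

(* X^blacktriangledown *)
definition lowB :: "'a set \<Rightarrow> ('a \<times> 'a) set \<Rightarrow> 'a set \<Rightarrow> 'a set" where
  "lowB U R X = {x \<in> U. Rimg U R x \<subseteq> X}"

(* X^blacktriangle *)
definition upB :: "'a set \<Rightarrow> ('a \<times> 'a) set \<Rightarrow> 'a set \<Rightarrow> 'a set" where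
  "upB U R X = {x \<in> U. Rimg U R x \<inter> X \<noteq> {}}"

(* X^triangledown *)
definition lowW :: "'a set \<Rightarrow> ('a \<times> 'a) set \<Rightarrow> 'a set \<Rightarrow> 'a set" where
  "lowW U R X = {x \<in> U. Rinv U R x \<subseteq> X}"

(* X^vartriangle *)
definition upW :: "'a set \<Rightarrow> ('a \<times> 'a) set \<Rightarrow> 'a set \<Rightarrow> 'a set" where
  "upW U R X = {x \<in> U. Rinv U R x \<inter> X \<noteq> {}}"

definition singletons :: "'a set \<Rightarrow> ('a \<times> 'a) set \<Rightarrow> 'a set" where
  "singletons U R = {x \<in> U. card (Rimg U R x) = 1}"

definition DMRS :: "'a set \<Rightarrow> ('a \<times> 'a) set \<Rightarrow> ('a set \<times> 'a set) set" where
  "DMRS U R = {(A, B). A \<in> lowB U R ` Pow U \<and> B \<in> upB U R ` Pow U \<and>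
      upB U R (upW U R A) \<subseteq> B \<and> A \<inter> singletons U R = B \<inter> singletons U R}"

definition pair_le :: "'a set \<times> 'a set \<Rightarrow> 'a set \<times> 'a set \<Rightarrow> bool" where
  "pair_le p q \<longleftrightarrow> fst p \<subseteq> fst q \<and> snd p \<subseteq> snd q"

definition dm_neg :: "'a set \<Rightarrow> 'a set \<times> 'a set \<Rightarrow> 'a set \<times> 'a set" where
  "dm_neg U p = (U - snd p, U - fst p)"

end

theory Submission
  imports Defs
begin

locale cdl =
  fixes L :: "'b set" and le :: "'b \<Rightarrow> 'b \<Rightarrow> bool" (infix "\<sqsubseteq>" 50)
  assumes refl: "a \<in> L \<Longrightarrow> a \<sqsubseteq> a"
  and antisym: "a \<in> L \<Longrightarrow> b \<in> L \<Longrightarrow> a \<sqsubseteq> b \<Longrightarrow> b \<sqsubseteq> a \<Longrightarrow> a = b"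
  and trans: "a \<in> L \<Longrightarrow> b \<in> L \<Longrightarrow> c \<in> L \<Longrightarrow> a \<sqsubseteq> b \<Longrightarrow> b \<sqsubseteq> c \<Longrightarrow> a \<sqsubseteq> c"
  and lub_ex: "A \<subseteq> L \<Longrightarrow> \<exists>x. is_lub L le A x"
  and glb_ex: "A \<subseteq> L \<Longrightarrow> \<exists>x. is_glb L le A x"
  and cd: "completely_distributive L le"
  and sp: "spatial L le"
begin

abbreviation "cji j \<equiv> completely_join_irreducible L le j"

lemma lub_unique: "is_lub L le A x \<Longrightarrow> is_lub L le A y \<Longrightarrow> x = y"
  unfolding is_lub_def using antisym by blast

lemma glb_unique: "is_glb L le A x \<Longrightarrow> is_glb L le A y \<Longrightarrow> x = y"
  unfolding is_glb_def using antisym by blast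

lemma lsup_is: assumes "A \<subseteq> L" shows "is_lub L le A (lsup L le A)"
proof -
  obtain x where x: "is_lub L le A x" using lub_ex assms by blast
  have "lsup L le A = x" unfolding lsup_def by (rule the_equality) (use x lub_unique in auto)
  then show ?thesis using x by simp
qed

lemma linf_is: assumes "A \<subseteq> L" shows "is_glb L le A (linf L le A)"
proof -
  obtain x where x: "is_glb L le A x" using glb_ex assms by blast
  have "linf L le A = x" unfolding linf_def by (rule the_equality) (use x glb_unique in auto)
  then show ?thesis using x by simp
qed

lemma lsup_eq: "is_lub L le A x \<Longrightarrow> lsup L le A = x"
  unfolding lsup_def by (rule the_equality) (auto intro: lub_unique)

lemma linf_eq: "is_glb L le A x \<Longrightarrow> linf L le A = x"
  unfolding linf_def by (rule the_equality) (auto intro: glb_unique)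

lemma lsup_in: "A \<subseteq> L \<Longrightarrow> lsup L le A \<in> L"
  using lsup_is[of A] unfolding is_lub_def by blast
lemma lsup_upper: "A \<subseteq> L \<Longrightarrow> a \<in> A \<Longrightarrow> a \<sqsubseteq> lsup L le A"
  using lsup_is[of A] unfolding is_lub_def by blast
lemma lsup_least: "A \<subseteq> L \<Longrightarrow> y \<in> L \<Longrightarrow> (\<And>a. a \<in> A \<Longrightarrow> a \<sqsubseteq> y) \<Longrightarrow> lsup L le A \<sqsubseteq> y"
  using lsup_is[of A] unfolding is_lub_def by blast

lemma join_in: "a \<in> L \<Longrightarrow> b \<in> L \<Longrightarrow> ljoin L le a b \<in> L"
  unfolding ljoin_def by (rule lsup_in) auto
lemma join_ub1: "a \<in> L \<Longrightarrow> b \<in> L \<Longrightarrow> a \<sqsubseteq> ljoin L le a b"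
  unfolding ljoin_def by (rule lsup_upper) auto
lemma join_ub2: "a \<in> L \<Longrightarrow> b \<in> L \<Longrightarrow> b \<sqsubseteq> ljoin L le a b"
  unfolding ljoin_def by (rule lsup_upper) auto
lemma join_least: "a \<in> L \<Longrightarrow> b \<in> L \<Longrightarrow> y \<in> L \<Longrightarrow> a \<sqsubseteq> y \<Longrightarrow> b \<sqsubseteq> y \<Longrightarrow> ljoin L le a b \<sqsubseteq> y"
  unfolding ljoin_def by (rule lsup_least) auto

lemma meet_in: "a \<in> L \<Longrightarrow> b \<in> L \<Longrightarrow> lmeet L le a b \<in> L"
  unfolding lmeet_def using linf_is[of "{a,b}"] unfolding is_glb_def by auto
lemma meet_le_iff: "a \<in> L \<Longrightarrow> b \<in> L \<Longrightarrow> j \<in> L \<Longrightarrow> j \<sqsubseteq> lmeet L le a b \<longleftrightarrow> j \<sqsubseteq> a \<and> j \<sqsubseteq> b"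
proof -
  assume a: "a \<in> L" "b \<in> L" "j \<in> L"
  have g: "is_glb L le {a,b} (lmeet L le a b)" unfolding lmeet_def using a by (intro linf_is) auto
  show ?thesis
  proof
    assume "j \<sqsubseteq> lmeet L le a b"
    then show "j \<sqsubseteq> a \<and> j \<sqsubseteq> b" using g a trans unfolding is_glb_def by blast
  next
    assume "j \<sqsubseteq> a \<and> j \<sqsubseteq> b"
    then show "j \<sqsubseteq> lmeet L le a b" using g a unfolding is_glb_def by blast
  qed
qed

lemma meet_lb1: "a \<in> L \<Longrightarrow> b \<in> L \<Longrightarrow> lmeet L le a b \<sqsubseteq> a"
  using meet_le_iff meet_in refl by blast
lemma meet_lb2: "a \<in> L \<Longrightarrow> b \<in> L \<Longrightarrow> lmeet L le a b \<sqsubseteq> b"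
  using meet_le_iff meet_in refl by blast

lemma lsup_single: "a \<in> L \<Longrightarrow> lsup L le {a} = a"
  by (rule lsup_eq) (auto simp: is_lub_def refl)

lemma dist_inf: assumes a: "a \<in> L" and X: "X \<subseteq> L"
  shows "lmeet L le a (lsup L le X) = lsup L le {lmeet L le a x | x. x \<in> X}"
proof -
  let ?A = "{{a}, X}"
  have A: "?A \<subseteq> Pow L" using a X by auto
  from cd A have eq: "linf L le ((\<lambda>A. lsup L le A) ` ?A) =
        lsup L le {linf L le (f ` ?A) | f. \<forall>A\<in>?A. f A \<in> A}"
    unfolding completely_distributive_def by blast
  have l: "linf L le ((\<lambda>A. lsup L le A) ` ?A) = lmeet L le a (lsup L le X)"
    unfolding lmeet_def using lsup_single[OF a] by simp
  have r: "{linf L le (f ` ?A) | f. \<forall>A\<in>?A. f A \<in> A} = {lmeet L le a x | x. x \<in> X}"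
  proof (intro set_eqI iffI)
    fix y assume "y \<in> {linf L le (f ` ?A) | f. \<forall>A\<in>?A. f A \<in> A}"
    then obtain f where f: "\<forall>A\<in>?A. f A \<in> A" and y: "y = linf L le (f ` ?A)" by blast
    have "f {a} = a" using f by auto
    moreover have "f X \<in> X" using f by auto
    ultimately show "y \<in> {lmeet L le a x | x. x \<in> X}" unfolding y lmeet_def by auto
  next
    fix y assume "y \<in> {lmeet L le a x | x. x \<in> X}"
    then obtain x where x: "x \<in> X" and y: "y = lmeet L le a x" by blast
    define f where "f = (\<lambda>A. if A = {a} then a else x)"
    have f1: "\<forall>A\<in>?A. f A \<in> A" using x by (auto simp: f_def)
    have "f ` ?A = {a, x}" using x by (auto simp: f_def)
    then have "y = linf L le (f ` ?A)" unfolding y lmeet_def by simp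
    then show "y \<in> {linf L le (f ` ?A) | f. \<forall>A\<in>?A. f A \<in> A}" using f1 by blast
  qed
  show ?thesis using eq l r by simp
qed

lemma cji_in: "cji j \<Longrightarrow> j \<in> L"
  unfolding completely_join_irreducible_def by blast

lemma prime: assumes j: "cji j" and X: "X \<subseteq> L" and le: "j \<sqsubseteq> lsup L le X"
  shows "\<exists>x\<in>X. j \<sqsubseteq> x"
proof -
  have jL: "j \<in> L" using j cji_in by blast
  have sL: "lsup L le X \<in> L" using lsup_in X by blast
  have "j \<sqsubseteq> lmeet L le j (lsup L le X)" using meet_le_iff[OF jL sL jL] refl[OF jL] le by blast
  then have "lmeet L le j (lsup L le X) = j"
    using antisym[OF meet_in[OF jL sL] jL] meet_lb1[OF jL sL] by blast
  then have "j = lsup L le {lmeet L le j x | x. x \<in> X}" using dist_inf[OF jL X] by simp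
  moreover have T: "{lmeet L le j x | x. x \<in> X} \<subseteq> L" using X jL meet_in by blast
  ultimately have "is_lub L le {lmeet L le j x | x. x \<in> X} j" using lsup_is by metis
  then have "j \<in> {lmeet L le j x | x. x \<in> X}" using j T unfolding completely_join_irreducible_def by blast
  then obtain x where "x \<in> X" "j = lmeet L le j x" by blast
  then show ?thesis using meet_lb2[OF jL] X by (metis subsetD)
qed

lemma prime2: assumes j: "cji j" and a: "a \<in> L" and b: "b \<in> L"
  shows "j \<sqsubseteq> ljoin L le a b \<longleftrightarrow> j \<sqsubseteq> a \<or> j \<sqsubseteq> b"
proof
  assume "j \<sqsubseteq> ljoin L le a b"
  then show "j \<sqsubseteq> a \<or> j \<sqsubseteq> b" using prime[OF j, of "{a,b}"] a b unfolding ljoin_def by auto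
next
  assume "j \<sqsubseteq> a \<or> j \<sqsubseteq> b"
  then show "j \<sqsubseteq> ljoin L le a b" using trans cji_in[OF j] a b join_in join_ub1 join_ub2 by metis
qed

lemma spatial_le: assumes a: "a \<in> L" and b: "b \<in> L" and H: "\<And>j. cji j \<Longrightarrow> j \<sqsubseteq> a \<Longrightarrow> j \<sqsubseteq> b"
  shows "a \<sqsubseteq> b"
proof -
  have "is_lub L le {j \<in> L. cji j \<and> j \<sqsubseteq> a} a" using sp a unfolding spatial_def by blast
  then show ?thesis using b H unfolding is_lub_def by blast
qed

lemma spatial_eq: assumes a: "a \<in> L" and b: "b \<in> L" and H: "\<And>j. cji j \<Longrightarrow> j \<sqsubseteq> a \<longleftrightarrow> j \<sqsubseteq> b"
  shows "a = b"
  using spatial_le[OF a b] spatial_le[OF b a] H antisym a b by blast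

definition imp where "imp a c = lsup L le {y \<in> L. lmeet L le a y \<sqsubseteq> c}"

lemma imp_is_rpc: assumes a: "a \<in> L" and c: "c \<in> L" shows "is_rpc L le a c (imp a c)"
proof -
  let ?Y = "{y \<in> L. lmeet L le a y \<sqsubseteq> c}"
  have Y: "?Y \<subseteq> L" by blast
  have iL: "imp a c \<in> L" unfolding imp_def using lsup_in Y by blast
  have "lmeet L le a (imp a c) = lsup L le {lmeet L le a x | x. x \<in> ?Y}"
    unfolding imp_def using dist_inf[OF a Y] .
  also have "\<dots> \<sqsubseteq> c" using a c meet_in by (intro lsup_least) auto
  finally have 1: "lmeet L le a (imp a c) \<sqsubseteq> c" .
  have 2: "\<forall>y\<in>L. lmeet L le a y \<sqsubseteq> c \<longrightarrow> y \<sqsubseteq> imp a c"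
    unfolding imp_def using lsup_upper Y by blast
  show ?thesis unfolding is_rpc_def using iL 1 2 by blast
qed

lemma rpc_unique: "is_rpc L le a c x \<Longrightarrow> is_rpc L le a c y \<Longrightarrow> x = y"
  unfolding is_rpc_def using antisym by blast

lemma rpc_eq: assumes a: "a \<in> L" and c: "c \<in> L" shows "rpc L le a c = imp a c"
  unfolding rpc_def using imp_is_rpc[OF a c] rpc_unique by blast

lemma rpc_in: assumes a: "a \<in> L" and c: "c \<in> L" shows "rpc L le a c \<in> L"
  using rpc_eq[OF a c] imp_is_rpc[OF a c] unfolding is_rpc_def by simp

lemma rpc_J: assumes a: "a \<in> L" and c: "c \<in> L" and j: "cji j"
  shows "j \<sqsubseteq> rpc L le a c \<longleftrightarrow> (\<forall>k. cji k \<longrightarrow> k \<sqsubseteq> j \<longrightarrow> k \<sqsubseteq> a \<longrightarrow> k \<sqsubseteq> c)"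
proof -
  have r: "is_rpc L le a c (rpc L le a c)" using rpc_eq[OF a c] imp_is_rpc[OF a c] by simp
  have rL: "rpc L le a c \<in> L" using r unfolding is_rpc_def by blast
  have jL: "j \<in> L" using j cji_in by blast
  show ?thesis
  proof
    assume h: "j \<sqsubseteq> rpc L le a c"
    show "\<forall>k. cji k \<longrightarrow> k \<sqsubseteq> j \<longrightarrow> k \<sqsubseteq> a \<longrightarrow> k \<sqsubseteq> c"
    proof (intro allI impI)
      fix k assume k: "cji k" "k \<sqsubseteq> j" "k \<sqsubseteq> a"
      have kL: "k \<in> L" using k cji_in by blast
      have "k \<sqsubseteq> rpc L le a c" using trans[OF kL jL rL] k h by blast
      then have "k \<sqsubseteq> lmeet L le a (rpc L le a c)" using meet_le_iff[OF a rL kL] k by blast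
      moreover have "lmeet L le a (rpc L le a c) \<sqsubseteq> c" using r unfolding is_rpc_def by blast
      ultimately show "k \<sqsubseteq> c" using trans kL meet_in[OF a rL] c by blast
    qed
  next
    assume h: "\<forall>k. cji k \<longrightarrow> k \<sqsubseteq> j \<longrightarrow> k \<sqsubseteq> a \<longrightarrow> k \<sqsubseteq> c"
    have "lmeet L le a j \<sqsubseteq> c"
    proof (rule spatial_le[OF meet_in[OF a jL] c])
      fix k assume k: "cji k" "k \<sqsubseteq> lmeet L le a j"
      then show "k \<sqsubseteq> c" using h meet_le_iff[OF a jL] cji_in by blast
    qed
    then show "j \<sqsubseteq> rpc L le a c" using r jL unfolding is_rpc_def by blast
  qed
qed

end

lemma nd: "(A \<Longrightarrow> B) \<Longrightarrow> \<not> A \<or> B" by blast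

locale kcdl = cdl +
  fixes neg
  assumes neg_in: "a \<in> L \<Longrightarrow> neg a \<in> L"
  and neg_neg: "a \<in> L \<Longrightarrow> neg (neg a) = a"
  and neg_anti: "a \<in> L \<Longrightarrow> b \<in> L \<Longrightarrow> a \<sqsubseteq> b \<Longrightarrow> neg b \<sqsubseteq> neg a"
begin

lemma neg_iff: "a \<in> L \<Longrightarrow> b \<in> L \<Longrightarrow> neg b \<sqsubseteq> neg a \<longleftrightarrow> a \<sqsubseteq> b"
  using neg_anti neg_neg neg_in by metis

lemma neg_swap: "a \<in> L \<Longrightarrow> b \<in> L \<Longrightarrow> a \<sqsubseteq> neg b \<longleftrightarrow> b \<sqsubseteq> neg a"
  using neg_iff neg_neg neg_in by metis

definition kappa where "kappa j = lsup L le {x \<in> L. \<not> j \<sqsubseteq> x}"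

lemma kappa_in: "kappa j \<in> L" unfolding kappa_def by (rule lsup_in) auto

lemma kappa_not: assumes j: "cji j" shows "\<not> j \<sqsubseteq> kappa j"
  using prime[OF j, of "{x \<in> L. \<not> j \<sqsubseteq> x}"] unfolding kappa_def by auto

lemma kappa_iff: assumes j: "cji j" and x: "x \<in> L" shows "x \<sqsubseteq> kappa j \<longleftrightarrow> \<not> j \<sqsubseteq> x"
proof
  assume h: "x \<sqsubseteq> kappa j"
  show "\<not> j \<sqsubseteq> x"
  proof
    assume "j \<sqsubseteq> x"
    then have "j \<sqsubseteq> kappa j" using trans[OF cji_in[OF j] x kappa_in] h by blast
    then show False using kappa_not[OF j] by blast
  qed
next
  assume "\<not> j \<sqsubseteq> x"
  then show "x \<sqsubseteq> kappa j" unfolding kappa_def using x by (intro lsup_upper) auto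
qed

definition g where "g j = neg (kappa j)"

lemma g_in: "g j \<in> L" unfolding g_def using neg_in kappa_in by blast

lemma g_le: assumes j: "cji j" and x: "x \<in> L" shows "g j \<sqsubseteq> x \<longleftrightarrow> \<not> j \<sqsubseteq> neg x"
proof -
  have "g j \<sqsubseteq> x \<longleftrightarrow> neg x \<sqsubseteq> kappa j"
    unfolding g_def using neg_iff[OF neg_in[OF x] kappa_in] neg_neg[OF x] by simp
  also have "\<dots> \<longleftrightarrow> \<not> j \<sqsubseteq> neg x" using kappa_iff[OF j neg_in[OF x]] .
  finally show ?thesis .
qed

lemma neg_J: assumes j: "cji j" and x: "x \<in> L" shows "j \<sqsubseteq> neg x \<longleftrightarrow> \<not> g j \<sqsubseteq> x"
  using g_le[OF j x] by blast

lemma g_cji: assumes j: "cji j" shows "cji (g j)"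
  unfolding completely_join_irreducible_def
proof (intro conjI allI impI g_in)
  fix S assume S: "S \<subseteq> L" and lub: "is_lub L le S (g j)"
  show "g j \<in> S"
  proof (rule ccontr)
    assume nS: "g j \<notin> S"
    have jL: "j \<in> L" using cji_in[OF j] .
    have "\<forall>t\<in>S. t \<sqsubseteq> neg j"
    proof
      fix t assume t: "t \<in> S"
      have tL: "t \<in> L" using t S by blast
      have tle: "t \<sqsubseteq> g j" using lub t unfolding is_lub_def by blast
      have "j \<sqsubseteq> neg t"
      proof (rule ccontr)
        assume "\<not> j \<sqsubseteq> neg t"
        then have "g j \<sqsubseteq> t" using g_le[OF j tL] by blast
        then have "t = g j" using antisym[OF tL g_in] tle by blast
        then show False using t nS by blast
      qed
      then show "t \<sqsubseteq> neg j" using neg_swap[OF jL tL] by blast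
    qed
    then have "g j \<sqsubseteq> neg j" using lub neg_in[OF jL] unfolding is_lub_def by blast
    then have "\<not> j \<sqsubseteq> neg (neg j)" using g_le[OF j neg_in[OF jL]] by blast
    then show False using neg_neg[OF jL] refl[OF jL] by simp
  qed
qed

lemma g_g: assumes j: "cji j" shows "g (g j) = j"
proof -
  have jL: "j \<in> L" using cji_in[OF j] .
  have gj: "cji (g j)" using g_cji[OF j] .
  have key: "\<And>x. x \<in> L \<Longrightarrow> g (g j) \<sqsubseteq> x \<longleftrightarrow> j \<sqsubseteq> x"
  proof -
    fix x assume x: "x \<in> L"
    have "g (g j) \<sqsubseteq> x \<longleftrightarrow> \<not> g j \<sqsubseteq> neg x" using g_le[OF gj x] .
    also have "\<dots> \<longleftrightarrow> j \<sqsubseteq> neg (neg x)" using g_le[OF j neg_in[OF x]] by blast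
    finally show "g (g j) \<sqsubseteq> x \<longleftrightarrow> j \<sqsubseteq> x" using neg_neg[OF x] by simp
  qed
  show ?thesis using key[OF jL] key[OF g_in] refl[OF jL] refl[OF g_in] antisym[OF g_in jL] by blast
qed

lemma g_anti: assumes j: "cji j" and k: "cji k" and le: "j \<sqsubseteq> k" shows "g k \<sqsubseteq> g j"
proof -
  have jL: "j \<in> L" using cji_in[OF j] .
  have kL: "k \<in> L" using cji_in[OF k] .
  have "\<not> j \<sqsubseteq> neg (g j)" using g_le[OF j g_in] refl[OF g_in] by blast
  then have "\<not> k \<sqsubseteq> neg (g j)" using trans[OF jL kL neg_in[OF g_in]] le by blast
  then show ?thesis using g_le[OF k g_in] by blast
qed

lemma g_iff: assumes j: "cji j" and k: "cji k" shows "g j \<sqsubseteq> g k \<longleftrightarrow> k \<sqsubseteq> j"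
  using g_anti[OF k j] g_anti[OF g_cji[OF j] g_cji[OF k]] g_g[OF j] g_g[OF k] by metis

lemma g_swap: assumes j: "cji j" and k: "cji k" shows "j \<sqsubseteq> g k \<longleftrightarrow> k \<sqsubseteq> g j"
  using g_iff[OF g_cji[OF k] j] g_g[OF k] by metis

lemma J_le_join: "cji j \<Longrightarrow> a \<in> L \<Longrightarrow> b \<in> L \<Longrightarrow> j \<sqsubseteq> ljoin L le a b \<longleftrightarrow> j \<sqsubseteq> a \<or> j \<sqsubseteq> b"
  using prime2 .

lemma nimp_in: "a \<in> L \<Longrightarrow> b \<in> L \<Longrightarrow> nelson_imp L le neg a b \<in> L"
  unfolding nelson_imp_def using rpc_in join_in neg_in by blast

lemma nimp_J: assumes a: "a \<in> L" and b: "b \<in> L" and j: "cji j"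
  shows "j \<sqsubseteq> nelson_imp L le neg a b \<longleftrightarrow>
     (\<forall>k. cji k \<longrightarrow> k \<sqsubseteq> j \<longrightarrow> k \<sqsubseteq> a \<longrightarrow> \<not> g k \<sqsubseteq> a \<or> k \<sqsubseteq> b)"
proof -
  have c: "ljoin L le (neg a) b \<in> L" using join_in neg_in a b by blast
  have "\<And>k. cji k \<Longrightarrow> k \<sqsubseteq> ljoin L le (neg a) b \<longleftrightarrow> \<not> g k \<sqsubseteq> a \<or> k \<sqsubseteq> b"
    using prime2 neg_in[OF a] b neg_J a by blast
  then show ?thesis unfolding nelson_imp_def using rpc_J[OF a c j] by blast
qed

definition Crit where
  "Crit \<longleftrightarrow> (\<forall>m k. cji m \<longrightarrow> cji k \<longrightarrow> m \<sqsubseteq> k \<longrightarrow> g m \<sqsubseteq> k \<or> g m \<sqsubseteq> g k \<or>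
     (\<exists>n. cji n \<and> m \<sqsubseteq> n \<and> n \<noteq> m \<and> n \<sqsubseteq> k \<and> n \<sqsubseteq> g m \<and> (g n \<sqsubseteq> k \<or> g n \<sqsubseteq> g k)))"

lemma crit_imp_nelson: assumes C: Crit and a: "a \<in> L" and b: "b \<in> L" and c: "c \<in> L"
  shows "nelson_imp L le neg (lmeet L le a b) c = nelson_imp L le neg a (nelson_imp L le neg b c)"
proof (rule spatial_eq)
  have ab: "lmeet L le a b \<in> L" using meet_in a b by blast
  have bc: "nelson_imp L le neg b c \<in> L" using nimp_in b c by blast
  show "nelson_imp L le neg (lmeet L le a b) c \<in> L" using nimp_in ab c by blast
  show "nelson_imp L le neg a (nelson_imp L le neg b c) \<in> L" using nimp_in a bc by blast
  fix j assume j: "cji j"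
  have jL: "j \<in> L" using cji_in[OF j] .
  note mab = meet_le_iff[OF a b]
  have gin: "\<And>k. g k \<in> L" by (rule g_in)
  show "j \<sqsubseteq> nelson_imp L le neg (lmeet L le a b) c \<longleftrightarrow> j \<sqsubseteq> nelson_imp L le neg a (nelson_imp L le neg b c)"
  proof
    assume LHS: "j \<sqsubseteq> nelson_imp L le neg (lmeet L le a b) c"
    have LH: "\<And>k. cji k \<Longrightarrow> k \<sqsubseteq> j \<Longrightarrow> k \<sqsubseteq> a \<Longrightarrow> k \<sqsubseteq> b \<Longrightarrow> g k \<sqsubseteq> a \<Longrightarrow> g k \<sqsubseteq> b \<Longrightarrow> k \<sqsubseteq> c"
      using LHS nimp_J[OF ab c j] mab cji_in gin by blast
    show "j \<sqsubseteq> nelson_imp L le neg a (nelson_imp L le neg b c)"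
      unfolding nimp_J[OF a bc j]
    proof (intro allI impI)
      fix k assume k: "cji k" "k \<sqsubseteq> j" "k \<sqsubseteq> a"
      have kL: "k \<in> L" using cji_in[OF k(1)] .
      show "\<not> g k \<sqsubseteq> a \<or> k \<sqsubseteq> nelson_imp L le neg b c"
      proof (rule nd)
        assume gka: "g k \<sqsubseteq> a"
        show "k \<sqsubseteq> nelson_imp L le neg b c" unfolding nimp_J[OF b c k(1)]
        proof (intro allI impI)
          fix m assume m: "cji m" "m \<sqsubseteq> k" "m \<sqsubseteq> b"
          have mL: "m \<in> L" using cji_in[OF m(1)] .
          show "\<not> g m \<sqsubseteq> b \<or> m \<sqsubseteq> c"
          proof (rule nd)
            assume gmb: "g m \<sqsubseteq> b"
            have mj: "m \<sqsubseteq> j" using trans[OF mL kL jL] m k by blast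
            have ma: "m \<sqsubseteq> a" using trans[OF mL kL a] m k by blast
            show "m \<sqsubseteq> c"
            proof (cases "g m \<sqsubseteq> a")
              case True
              show ?thesis using LH[OF m(1) mj ma m(3) True gmb] by blast
            next
              case False
              have gka': "\<And>x. x \<sqsubseteq> g k \<Longrightarrow> x \<in> L \<Longrightarrow> x \<sqsubseteq> a" using trans gin gka a by blast
              have gka'': "\<And>x. x \<sqsubseteq> k \<Longrightarrow> x \<in> L \<Longrightarrow> x \<sqsubseteq> a" using trans kL k(3) a by blast
              from C m(1) k(1) m(2) have
                "g m \<sqsubseteq> k \<or> g m \<sqsubseteq> g k \<or>
                 (\<exists>n. cji n \<and> m \<sqsubseteq> n \<and> n \<noteq> m \<and> n \<sqsubseteq> k \<and> n \<sqsubseteq> g m \<and> (g n \<sqsubseteq> k \<or> g n \<sqsubseteq> g k))"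
                unfolding Crit_def by blast
              then obtain n where n: "cji n" "m \<sqsubseteq> n" "n \<sqsubseteq> k" "n \<sqsubseteq> g m" "g n \<sqsubseteq> k \<or> g n \<sqsubseteq> g k"
                using False gka' gka'' gin by blast
              have nL: "n \<in> L" using cji_in[OF n(1)] .
              have gna: "g n \<sqsubseteq> a" using n(5) gka' gka'' gin by blast
              have nj: "n \<sqsubseteq> j" using trans[OF nL kL jL] n k by blast
              have na: "n \<sqsubseteq> a" using gka'' nL n by blast
              have nb: "n \<sqsubseteq> b" using trans[OF nL gin b] n gmb by blast
              have gnm: "g n \<sqsubseteq> g m" using g_anti[OF m(1) n(1) n(2)] .
              have gnb: "g n \<sqsubseteq> b" using trans[OF gin gin b] gnm gmb by blast
              have "n \<sqsubseteq> c" using LH[OF n(1) nj na nb gna gnb] .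
              then show ?thesis using trans[OF mL nL c] n(2) by blast
            qed
          qed
        qed
      qed
    qed
  next
    assume RHS: "j \<sqsubseteq> nelson_imp L le neg a (nelson_imp L le neg b c)"
    show "j \<sqsubseteq> nelson_imp L le neg (lmeet L le a b) c"
      unfolding nimp_J[OF ab c j]
    proof (intro allI impI)
      fix k assume k: "cji k" "k \<sqsubseteq> j" "k \<sqsubseteq> lmeet L le a b"
      have kL: "k \<in> L" using cji_in[OF k(1)] .
      show "\<not> g k \<sqsubseteq> lmeet L le a b \<or> k \<sqsubseteq> c"
      proof (rule nd)
        assume "g k \<sqsubseteq> lmeet L le a b"
        then have gk: "g k \<sqsubseteq> a" "g k \<sqsubseteq> b" using meet_le_iff[OF a b g_in] by auto
        have ka: "k \<sqsubseteq> a" "k \<sqsubseteq> b" using k(3) meet_le_iff[OF a b kL] by auto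
        have "k \<sqsubseteq> nelson_imp L le neg b c" using RHS unfolding nimp_J[OF a bc j] using k ka gk by blast
        then show "k \<sqsubseteq> c" using nimp_J[OF b c k(1)] k refl[OF kL] ka gk by blast
      qed
    qed
  qed
qed

lemma nelson_imp_crit:
  assumes N: "\<forall>a\<in>L. \<forall>b\<in>L. \<forall>c\<in>L. nelson_imp L le neg (lmeet L le a b) c = nelson_imp L le neg a (nelson_imp L le neg b c)"
  shows Crit
  unfolding Crit_def
proof (intro allI impI)
  fix m k assume m: "cji m" and k: "cji k" and mk: "m \<sqsubseteq> k"
  have mL: "m \<in> L" using cji_in[OF m] .
  have kL: "k \<in> L" using cji_in[OF k] .
  have gm: "cji (g m)" using g_cji[OF m] .
  have gk: "cji (g k)" using g_cji[OF k] .
  show "g m \<sqsubseteq> k \<or> g m \<sqsubseteq> g k \<or>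
     (\<exists>n. cji n \<and> m \<sqsubseteq> n \<and> n \<noteq> m \<and> n \<sqsubseteq> k \<and> n \<sqsubseteq> g m \<and> (g n \<sqsubseteq> k \<or> g n \<sqsubseteq> g k))"
  proof (rule ccontr)
    assume H: "\<not> ?thesis"
    define a where "a = ljoin L le k (g k)"
    define b where "b = ljoin L le m (g m)"
    define c where "c = kappa m"
    have aL: "a \<in> L" unfolding a_def using join_in kL g_in by blast
    have bL: "b \<in> L" unfolding b_def using join_in mL g_in by blast
    have cL: "c \<in> L" unfolding c_def using kappa_in .
    have ab: "lmeet L le a b \<in> L" using meet_in aL bL by blast
    have bc: "nelson_imp L le neg b c \<in> L" using nimp_in bL cL by blast
    have ka: "k \<sqsubseteq> a" "g k \<sqsubseteq> a" unfolding a_def using join_ub1 join_ub2 kL g_in by auto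
    have mb: "m \<sqsubseteq> b" "g m \<sqsubseteq> b" unfolding b_def using join_ub1 join_ub2 mL g_in by auto
    have J_a: "\<And>x. cji x \<Longrightarrow> x \<sqsubseteq> a \<longleftrightarrow> x \<sqsubseteq> k \<or> x \<sqsubseteq> g k" unfolding a_def using prime2 kL g_in by blast
    have J_b: "\<And>x. cji x \<Longrightarrow> x \<sqsubseteq> b \<longleftrightarrow> x \<sqsubseteq> m \<or> x \<sqsubseteq> g m" unfolding b_def using prime2 mL g_in by blast
    have J_c: "\<And>x. cji x \<Longrightarrow> x \<sqsubseteq> c \<longleftrightarrow> \<not> m \<sqsubseteq> x" unfolding c_def using kappa_iff[OF m] cji_in by blast
    have notR: "\<not> k \<sqsubseteq> nelson_imp L le neg a (nelson_imp L le neg b c)"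
    proof -
      have "\<not> k \<sqsubseteq> nelson_imp L le neg b c"
        unfolding nimp_J[OF bL cL k] using m mk mb J_c[OF m] refl[OF mL] by blast
      then show ?thesis unfolding nimp_J[OF aL bc k] using k refl[OF kL] ka by blast
    qed
    have L: "k \<sqsubseteq> nelson_imp L le neg (lmeet L le a b) c"
      unfolding nimp_J[OF ab cL k]
    proof (intro allI impI)
      fix p assume p: "cji p" "p \<sqsubseteq> k" "p \<sqsubseteq> lmeet L le a b"
      have pL: "p \<in> L" using cji_in[OF p(1)] .
      show "\<not> g p \<sqsubseteq> lmeet L le a b \<or> p \<sqsubseteq> c"
      proof (rule ccontr)
        assume "\<not> (\<not> g p \<sqsubseteq> lmeet L le a b \<or> p \<sqsubseteq> c)"
        then have gp: "g p \<sqsubseteq> a" "g p \<sqsubseteq> b" and mp: "m \<sqsubseteq> p"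
          using meet_le_iff[OF aL bL g_in] J_c[OF p(1)] by auto
        have pb: "p \<sqsubseteq> b" using p(3) meet_le_iff[OF aL bL pL] by blast
        have gpa: "g p \<sqsubseteq> k \<or> g p \<sqsubseteq> g k" using J_a[OF g_cji[OF p(1)]] gp by blast
        show False
        proof (cases "p = m")
          case True
          then show ?thesis using gpa H by blast
        next
          case False
          have "p \<sqsubseteq> m \<or> p \<sqsubseteq> g m" using J_b[OF p(1)] pb by blast
          moreover have "\<not> p \<sqsubseteq> m" using False antisym[OF pL mL] mp by blast
          ultimately have "p \<sqsubseteq> g m" by blast
          then show False using H p(1) mp False p(2) gpa by blast
        qed
      qed
    qed
    have "nelson_imp L le neg (lmeet L le a b) c = nelson_imp L le neg a (nelson_imp L le neg b c)"
      using N aL bL cL by blast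
    then show False using L notR by simp
  qed
qed

end

locale rs =
  fixes U :: "'a set" and R :: "('a \<times> 'a) set"
  assumes RU: "R \<subseteq> U \<times> U" and rf: "refl_on U R"
begin

lemma RD: "(x, y) \<in> R \<Longrightarrow> x \<in> U \<and> y \<in> U" using RU by blast
lemma Rrefl: "x \<in> U \<Longrightarrow> (x, x) \<in> R" using rf unfolding refl_on_def by blast

lemma mem_Ri[simp]: "y \<in> Rimg U R x \<longleftrightarrow> (x, y) \<in> R"
  unfolding Rimg_def using RD by blast
lemma mem_Rv[simp]: "y \<in> Rinv U R x \<longleftrightarrow> (y, x) \<in> R"
  unfolding Rinv_def using RD by blast
lemma mem_lowB[simp]: "x \<in> lowB U R X \<longleftrightarrow> x \<in> U \<and> Rimg U R x \<subseteq> X"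
  unfolding lowB_def by blast
lemma mem_upB[simp]: "x \<in> upB U R X \<longleftrightarrow> x \<in> U \<and> (\<exists>y. (x, y) \<in> R \<and> y \<in> X)"
  unfolding upB_def by auto
lemma mem_lowW[simp]: "x \<in> lowW U R X \<longleftrightarrow> x \<in> U \<and> Rinv U R x \<subseteq> X"
  unfolding lowW_def by blast
lemma mem_upW[simp]: "x \<in> upW U R X \<longleftrightarrow> x \<in> U \<and> (\<exists>y. (y, x) \<in> R \<and> y \<in> X)"
  unfolding upW_def by auto

lemma upB_single: "upB U R {z} = {x. (x, z) \<in> R}"
  using RD by auto

lemma S_iff: "s \<in> singletons U R \<longleftrightarrow> s \<in> U \<and> Rimg U R s = {s}"
proof
  assume s: "s \<in> singletons U R"
  then have sU: "s \<in> U" and c: "card (Rimg U R s) = 1" unfolding singletons_def by auto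
  from c obtain a where a: "Rimg U R s = {a}" using card_1_singletonE by blast
  have "s \<in> Rimg U R s" using Rrefl[OF sU] by simp
  then show "s \<in> U \<and> Rimg U R s = {s}" using a sU by auto
next
  assume "s \<in> U \<and> Rimg U R s = {s}"
  then show "s \<in> singletons U R" unfolding singletons_def by auto
qed

lemma S_R: "s \<in> singletons U R \<Longrightarrow> (s, y) \<in> R \<longleftrightarrow> y = s"
  using S_iff Rrefl by (metis mem_Ri singletonD singletonI)

definition isD where "isD A \<longleftrightarrow> A \<subseteq> U \<and> lowB U R (upW U R A) \<subseteq> A"
definition isU where "isU B \<longleftrightarrow> B \<subseteq> U \<and> B \<subseteq> upB U R (lowW U R B)"

lemma isD_img: "lowB U R ` Pow U = {A. isD A}"
proof (intro set_eqI iffI)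
  fix A assume "A \<in> lowB U R ` Pow U"
  then obtain X where X: "A = lowB U R X" by blast
  have "lowB U R (upW U R A) \<subseteq> A"
  proof
    fix x assume x: "x \<in> lowB U R (upW U R A)"
    have "Rimg U R x \<subseteq> X"
    proof
      fix y assume "y \<in> Rimg U R x"
      then have "y \<in> upW U R A" using x by auto
      then obtain a where "a \<in> A" "(a, y) \<in> R" by auto
      then show "y \<in> X" using X by auto
    qed
    then show "x \<in> A" using x X by auto
  qed
  then show "A \<in> {A. isD A}" unfolding isD_def using X by auto
next
  fix A assume "A \<in> {A. isD A}"
  then have A: "A \<subseteq> U" "lowB U R (upW U R A) \<subseteq> A" unfolding isD_def by auto
  have "A \<subseteq> lowB U R (upW U R A)"
  proof
    fix a assume a: "a \<in> A"
    then have aU: "a \<in> U" using A(1) by blast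
    have "Rimg U R a \<subseteq> upW U R A" using a RD by auto
    then show "a \<in> lowB U R (upW U R A)" using aU by simp
  qed
  then have "A = lowB U R (upW U R A)" using A by blast
  moreover have "upW U R A \<in> Pow U" by auto
  ultimately show "A \<in> lowB U R ` Pow U" by blast
qed

lemma isU_img: "upB U R ` Pow U = {B. isU B}"
proof (intro set_eqI iffI)
  fix B assume "B \<in> upB U R ` Pow U"
  then obtain X where X: "B = upB U R X" by blast
  have "B \<subseteq> upB U R (lowW U R B)"
  proof
    fix b assume "b \<in> B"
    then obtain w where w: "(b, w) \<in> R" "w \<in> X" using X by auto
    have "w \<in> lowW U R B" using w RD X by auto
    then show "b \<in> upB U R (lowW U R B)" using w RD by auto
  qed
  then show "B \<in> {B. isU B}" unfolding isU_def using X by auto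
next
  fix B assume "B \<in> {B. isU B}"
  then have B: "B \<subseteq> U" "B \<subseteq> upB U R (lowW U R B)" unfolding isU_def by auto
  have "upB U R (lowW U R B) \<subseteq> B" by (force simp: subset_iff)
  then have "B = upB U R (lowW U R B)" using B by blast
  moreover have "lowW U R B \<in> Pow U" by auto
  ultimately show "B \<in> upB U R ` Pow U" by blast
qed

lemma isU_ex: "isU B \<Longrightarrow> b \<in> B \<Longrightarrow> \<exists>w. (b, w) \<in> R \<and> upB U R {w} \<subseteq> B"
  unfolding isU_def upB_single by fastforce

lemma isU_intro: "B \<subseteq> U \<Longrightarrow> (\<And>b. b \<in> B \<Longrightarrow> \<exists>w. (b, w) \<in> R \<and> upB U R {w} \<subseteq> B) \<Longrightarrow> isU B"
  unfolding isU_def upB_single using RD by fastforce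

lemma isU_upB: "isU (upB U R X)"
  by (rule isU_intro) (use RD in fastforce)+

lemma isD_lowB: "isD (lowB U R X)"
  unfolding isD_def by (force simp: subset_iff)

abbreviation "S \<equiv> singletons U R"

lemma DM_iff: "(A, B) \<in> DMRS U R \<longleftrightarrow> isD A \<and> isU B \<and> upB U R (upW U R A) \<subseteq> B \<and> A \<inter> S = B \<inter> S"
  unfolding DMRS_def isD_img isU_img by auto

lemma DM_iff': "e \<in> DMRS U R \<longleftrightarrow> isD (fst e) \<and> isU (snd e) \<and> upB U R (upW U R (fst e)) \<subseteq> snd e \<and> fst e \<inter> S = snd e \<inter> S"
  using DM_iff[of "fst e" "snd e"] by simp

lemma DM_sub: "(A, B) \<in> DMRS U R \<Longrightarrow> A \<subseteq> B"
proof
  fix a assume e: "(A, B) \<in> DMRS U R" and a: "a \<in> A"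
  have aU: "a \<in> U" using e a unfolding DM_iff isD_def by blast
  have "a \<in> upB U R (upW U R A)" using a aU Rrefl by auto
  then show "a \<in> B" using e unfolding DM_iff by blast
qed

lemma DM_U: "(A, B) \<in> DMRS U R \<Longrightarrow> A \<subseteq> U \<and> B \<subseteq> U"
  unfolding DM_iff isD_def isU_def by blast

lemma D_close: assumes A: "isD A" and a: "a \<in> A" and x: "x \<in> U" and sub: "Rimg U R x \<subseteq> Rimg U R a"
  shows "x \<in> A"
proof -
  have "Rimg U R x \<subseteq> upW U R A"
  proof
    fix y assume "y \<in> Rimg U R x"
    then have "(a, y) \<in> R" using sub by auto
    then show "y \<in> upW U R A" using a RD by auto
  qed
  then have "x \<in> lowB U R (upW U R A)" using x by simp
  then show ?thesis using A unfolding isD_def by blast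
qed

lemma DM_tri: assumes e: "(A, B) \<in> DMRS U R" and a: "a \<in> A" and aw: "(a, w) \<in> R" and xw: "(x, w) \<in> R"
  shows "x \<in> B"
proof -
  have "w \<in> upW U R A" using a aw RD by auto
  then have "x \<in> upB U R (upW U R A)" using xw RD by auto
  then show ?thesis using e unfolding DM_iff by blast
qed

end

context rs begin

lemma self_Ri: "x \<in> U \<Longrightarrow> x \<in> Rimg U R x" using Rrefl by simp

lemma lowB_mono: "X \<subseteq> Y \<Longrightarrow> lowB U R X \<subseteq> lowB U R Y" unfolding lowB_def by blast
lemma upB_mono: "X \<subseteq> Y \<Longrightarrow> upB U R X \<subseteq> upB U R Y" unfolding upB_def by blast
lemma upW_mono: "X \<subseteq> Y \<Longrightarrow> upW U R X \<subseteq> upW U R Y" unfolding upW_def by blast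
lemma lowW_mono: "X \<subseteq> Y \<Longrightarrow> lowW U R X \<subseteq> lowW U R Y" unfolding lowW_def by blast

lemma Ri_sub: "Rimg U R v \<subseteq> Rimg U R c \<Longrightarrow> (v, y) \<in> R \<Longrightarrow> (c, y) \<in> R"
  by (metis mem_Ri subsetD)

definition Q where "Q c = (lowB U R (Rimg U R c), upB U R (Rimg U R c))"
definition T where "T z = (if z \<in> S then {z} else {}, upB U R {z})"

lemma Q_in: assumes c: "c \<in> U" shows "Q c \<in> DMRS U R"
  unfolding Q_def DM_iff
proof (intro conjI)
  show "isD (lowB U R (Rimg U R c))" by (rule isD_lowB)
  show "isU (upB U R (Rimg U R c))" by (rule isU_upB)
  show "upB U R (upW U R (lowB U R (Rimg U R c))) \<subseteq> upB U R (Rimg U R c)"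
  proof
    fix x assume "x \<in> upB U R (upW U R (lowB U R (Rimg U R c)))"
    then obtain y v where "x \<in> U" "(x, y) \<in> R" "(v, y) \<in> R" "v \<in> lowB U R (Rimg U R c)" by auto
    then show "x \<in> upB U R (Rimg U R c)" using Ri_sub by auto
  qed
  show "lowB U R (Rimg U R c) \<inter> S = upB U R (Rimg U R c) \<inter> S"
  proof (intro set_eqI iffI)
    fix s assume s: "s \<in> lowB U R (Rimg U R c) \<inter> S"
    then have sU: "s \<in> U" and cs: "(c, s) \<in> R" using S_iff by auto
    have "(s, s) \<in> R" using Rrefl[OF sU] .
    then have "s \<in> upB U R (Rimg U R c)" using sU cs by auto
    then show "s \<in> upB U R (Rimg U R c) \<inter> S" using s by blast
  next
    fix s assume s: "s \<in> upB U R (Rimg U R c) \<inter> S"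
    then obtain y where y: "(s, y) \<in> R" "(c, y) \<in> R" by auto
    have "y = s" using y S_R s by blast
    then show "s \<in> lowB U R (Rimg U R c) \<inter> S" using s y S_iff by auto
  qed
qed

lemma T_in: assumes z: "z \<in> U" shows "T z \<in> DMRS U R"
proof (cases "z \<in> S")
  case True
  have "T z = ({z}, upB U R {z})" unfolding T_def using True by simp
  moreover have "({z}, upB U R {z}) \<in> DMRS U R" unfolding DM_iff
  proof (intro conjI)
    show "isD {z}" unfolding isD_def
    proof (intro conjI)
      show "{z} \<subseteq> U" using z by auto
      show "lowB U R (upW U R {z}) \<subseteq> {z}"
      proof
        fix x assume x: "x \<in> lowB U R (upW U R {z})"
        then have "(x, x) \<in> R" using Rrefl by auto
        then have "x \<in> upW U R {z}" using x by auto
        then have "(z, x) \<in> R" by auto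
        then show "x \<in> {z}" using S_R[OF True] by auto
      qed
    qed
    show "isU (upB U R {z})" by (rule isU_upB)
    show "upB U R (upW U R {z}) \<subseteq> upB U R {z}"
    proof
      fix x assume "x \<in> upB U R (upW U R {z})"
      then obtain y where "x \<in> U" "(x, y) \<in> R" "(z, y) \<in> R" by auto
      then show "x \<in> upB U R {z}" using S_R[OF True] by auto
    qed
    show "{z} \<inter> S = upB U R {z} \<inter> S"
      using True Rrefl[OF z] S_R z by auto
  qed
  ultimately show ?thesis by simp
next
  case False
  have "T z = ({}, upB U R {z})" unfolding T_def using False by simp
  moreover have "({}, upB U R {z}) \<in> DMRS U R" unfolding DM_iff
  proof (intro conjI)
    show "isD {}" unfolding isD_def
    proof (intro conjI)
      show "lowB U R (upW U R {}) \<subseteq> {}"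
      proof
        fix x assume x: "x \<in> lowB U R (upW U R {})"
        then have "(x, x) \<in> R" using Rrefl by auto
        then show "x \<in> {}" using x by auto
      qed
    qed auto
    show "isU (upB U R {z})" by (rule isU_upB)
    show "upB U R (upW U R {}) \<subseteq> upB U R {z}" by auto
    show "{} \<inter> S = upB U R {z} \<inter> S"
    proof -
      have "\<And>s. s \<in> S \<Longrightarrow> (s, z) \<in> R \<Longrightarrow> False" using S_R False by metis
      then show ?thesis by auto
    qed
  qed
  ultimately show ?thesis by simp
qed

lemma T_S: "z \<in> S \<Longrightarrow> T z = Q z"
proof -
  assume zS: "z \<in> S"
  have z: "z \<in> U" "Rimg U R z = {z}" using zS S_iff by auto
  have "lowB U R {z} = {z}"
  proof (intro set_eqI iffI)
    fix x assume "x \<in> lowB U R {z}"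
    then have "x \<in> U" "Rimg U R x \<subseteq> {z}" by auto
    then show "x \<in> {z}" using self_Ri[of x] by blast
  next
    fix x assume "x \<in> {z}"
    then show "x \<in> lowB U R {z}" using z by auto
  qed
  then show ?thesis unfolding T_def Q_def using zS z by simp
qed

lemma Q_le: assumes c: "c \<in> U" and e: "e \<in> DMRS U R" shows "pair_le (Q c) e \<longleftrightarrow> c \<in> fst e"
proof
  assume "pair_le (Q c) e"
  then have "lowB U R (Rimg U R c) \<subseteq> fst e" unfolding pair_le_def Q_def by simp
  moreover have "c \<in> lowB U R (Rimg U R c)" using c by auto
  ultimately show "c \<in> fst e" by blast
next
  assume ce: "c \<in> fst e"
  obtain A B where AB: "e = (A, B)" by (cases e)
  have eAB: "(A, B) \<in> DMRS U R" using e AB by simp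
  have cA: "c \<in> A" using ce AB by simp
  have isD: "isD A" using eAB DM_iff by blast
  have 1: "lowB U R (Rimg U R c) \<subseteq> A"
  proof
    fix x assume "x \<in> lowB U R (Rimg U R c)"
    then show "x \<in> A" using D_close[OF isD cA] by auto
  qed
  have 2: "upB U R (Rimg U R c) \<subseteq> B"
  proof
    fix x assume "x \<in> upB U R (Rimg U R c)"
    then obtain y where "(x, y) \<in> R" "(c, y) \<in> R" by auto
    then show "x \<in> B" using DM_tri[OF eAB cA] by blast
  qed
  show "pair_le (Q c) e" unfolding pair_le_def Q_def AB using 1 2 by simp
qed

lemma T_le: assumes z: "z \<in> U" and e: "e \<in> DMRS U R" shows "pair_le (T z) e \<longleftrightarrow> upB U R {z} \<subseteq> snd e"
proof
  assume "pair_le (T z) e"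
  then show "upB U R {z} \<subseteq> snd e" unfolding pair_le_def T_def by simp
next
  assume h: "upB U R {z} \<subseteq> snd e"
  have "(if z \<in> S then {z} else {}) \<subseteq> fst e"
  proof (cases "z \<in> S")
    case True
    have "z \<in> upB U R {z}" using z Rrefl by auto
    then have "z \<in> snd e \<inter> S" using h True by blast
    then have "z \<in> fst e" using e DM_iff' by blast
    then show ?thesis using True by simp
  qed simp
  then show "pair_le (T z) e" unfolding pair_le_def T_def using h by simp
qed

lemma neg_in: assumes e: "e \<in> DMRS U R" shows "dm_neg U e \<in> DMRS U R"
proof -
  obtain A B where AB: "e = (A, B)" by (cases e)
  have eAB: "(A, B) \<in> DMRS U R" using e AB by simp
  have A: "isD A" and B: "isU B" and AB3: "upB U R (upW U R A) \<subseteq> B" and AS: "A \<inter> S = B \<inter> S"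
    using eAB unfolding DM_iff by auto
  have AU: "A \<subseteq> U" using A isD_def by blast
  have BU: "B \<subseteq> U" using B isU_def by blast
  have 1: "isD (U - B)" unfolding isD_def
  proof (intro conjI)
    show "lowB U R (upW U R (U - B)) \<subseteq> U - B"
    proof
      fix x assume x: "x \<in> lowB U R (upW U R (U - B))"
      show "x \<in> U - B"
      proof (rule ccontr)
        assume "x \<notin> U - B"
        then have "x \<in> B" using x by auto
        then obtain w where w: "(x, w) \<in> R" "upB U R {w} \<subseteq> B" using isU_ex[OF B] by blast
        have "w \<in> upW U R (U - B)" using x w by auto
        then obtain a where a: "(a, w) \<in> R" "a \<in> U - B" by auto
        have "a \<in> upB U R {w}" using a RD by auto
        then show False using a w by blast
      qed
    qed
  qed auto
  have 2: "isU (U - A)"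
  proof (rule isU_intro)
    fix b assume b: "b \<in> U - A"
    then have "b \<notin> lowB U R (upW U R A)" using A unfolding isD_def by blast
    then have "\<not> Rimg U R b \<subseteq> upW U R A" using b by auto
    then obtain w where w0: "w \<in> Rimg U R b" "w \<notin> upW U R A" by blast
    then have w: "(b, w) \<in> R" "w \<notin> upW U R A" by auto
    have "upB U R {w} \<subseteq> U - A"
    proof
      fix y assume "y \<in> upB U R {w}"
      then have y: "(y, w) \<in> R" "y \<in> U" by auto
      then have "y \<notin> A" using w RD by auto
      then show "y \<in> U - A" using y by blast
    qed
    then show "\<exists>w. (b, w) \<in> R \<and> upB U R {w} \<subseteq> U - A" using w by blast
  qed auto
  have 3: "upB U R (upW U R (U - B)) \<subseteq> U - A"
  proof
    fix x assume x: "x \<in> upB U R (upW U R (U - B))"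
    then obtain w b where xw: "(x, w) \<in> R" and bw: "(b, w) \<in> R" and b: "b \<in> U - B" by auto
    have "x \<notin> A"
    proof
      assume "x \<in> A"
      then have "b \<in> B" using DM_tri[OF eAB _ xw bw] by blast
      then show False using b by blast
    qed
    then show "x \<in> U - A" using x by auto
  qed
  have 4: "(U - B) \<inter> S = (U - A) \<inter> S" using AS by blast
  show ?thesis unfolding AB dm_neg_def DM_iff using 1 2 3 4 by simp
qed

lemma neg_neg: "e \<in> DMRS U R \<Longrightarrow> dm_neg U (dm_neg U e) = e"
  unfolding dm_neg_def using DM_U by (cases e) auto

lemma neg_anti: "pair_le a b \<Longrightarrow> pair_le (dm_neg U b) (dm_neg U a)"
  unfolding pair_le_def dm_neg_def by auto

lemma lub_DM: assumes F: "F \<subseteq> DMRS U R"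
  shows "is_lub (DMRS U R) pair_le F (lowB U R (upW U R (\<Union>(fst ` F))), \<Union>(snd ` F))"
proof -
  let ?Y = "\<Union>(fst ` F)"
  let ?A = "lowB U R (upW U R ?Y)"
  let ?B = "\<Union>(snd ` F)"
  have FD: "\<And>e. e \<in> F \<Longrightarrow> isD (fst e) \<and> isU (snd e) \<and> upB U R (upW U R (fst e)) \<subseteq> snd e \<and> fst e \<inter> S = snd e \<inter> S"
    using F DM_iff' by blast
  have YU: "?Y \<subseteq> U" using FD unfolding isD_def by blast
  have Y_A: "?Y \<subseteq> ?A"
  proof
    fix a assume a: "a \<in> ?Y"
    then have aU: "a \<in> U" using YU by blast
    have "Rimg U R a \<subseteq> upW U R ?Y"
    proof
      fix y assume "y \<in> Rimg U R a"
      then have ay: "(a, y) \<in> R" by simp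
      then have "y \<in> U" using RD by blast
      then show "y \<in> upW U R ?Y" using ay a unfolding mem_upW by blast
    qed
    then show "a \<in> ?A" using aU by simp
  qed
  have inL: "(?A, ?B) \<in> DMRS U R" unfolding DM_iff
  proof (intro conjI)
    show "isD ?A" by (rule isD_lowB)
    show "isU ?B"
    proof (rule isU_intro)
      show "?B \<subseteq> U" using FD unfolding isU_def by blast
      fix b assume "b \<in> ?B"
      then obtain e where e: "e \<in> F" "b \<in> snd e" by blast
      then obtain w where "(b, w) \<in> R" "upB U R {w} \<subseteq> snd e" using isU_ex FD by blast
      then show "\<exists>w. (b, w) \<in> R \<and> upB U R {w} \<subseteq> ?B" using e by blast
    qed
    show "upB U R (upW U R ?A) \<subseteq> ?B"
    proof
      fix x assume "x \<in> upB U R (upW U R ?A)"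
      then obtain w v where xw: "(x, w) \<in> R" and vw: "(v, w) \<in> R" and v: "v \<in> ?A" by auto
      have "w \<in> upW U R ?Y" using v vw by auto
      then obtain a e where a: "(a, w) \<in> R" "e \<in> F" "a \<in> fst e" by auto
      have eL: "(fst e, snd e) \<in> DMRS U R" using a F by auto
      have "x \<in> snd e" using DM_tri[OF eL a(3) a(1) xw] .
      then show "x \<in> ?B" using a by blast
    qed
    show "?A \<inter> S = ?B \<inter> S"
    proof (intro set_eqI iffI)
      fix s assume s: "s \<in> ?A \<inter> S"
      then have "s \<in> Rimg U R s" "Rimg U R s \<subseteq> upW U R ?Y" using self_Ri by auto
      then have "s \<in> upW U R ?Y" by blast
      then obtain a e where a: "(a, s) \<in> R" "e \<in> F" "a \<in> fst e" by auto
      have eL: "(fst e, snd e) \<in> DMRS U R" using a F by auto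
      have "(s, s) \<in> R" using s Rrefl by auto
      then have "s \<in> snd e" using DM_tri[OF eL a(3) a(1)] by blast
      then show "s \<in> ?B \<inter> S" using s a by blast
    next
      fix s assume s: "s \<in> ?B \<inter> S"
      then obtain e where e: "e \<in> F" "s \<in> snd e" by blast
      then have "s \<in> fst e" using FD s by blast
      then show "s \<in> ?A \<inter> S" using Y_A e s by blast
    qed
  qed
  show ?thesis unfolding is_lub_def
  proof (intro conjI ballI impI)
    show "(?A, ?B) \<in> DMRS U R" by (rule inL)
    fix e assume "e \<in> F"
    then show "pair_le e (?A, ?B)" unfolding pair_le_def using Y_A by auto
  next
    fix y assume y: "y \<in> DMRS U R" and ub: "\<forall>e\<in>F. pair_le e y"
    have "?Y \<subseteq> fst y" using ub unfolding pair_le_def by auto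
    then have "?A \<subseteq> fst y"
    proof -
      assume Yy: "?Y \<subseteq> fst y"
      have Dy: "isD (fst y)" using y DM_iff' by blast
      show "?A \<subseteq> fst y"
      proof
        fix x assume "x \<in> ?A"
        then have "x \<in> lowB U R (upW U R (fst y))" using lowB_mono[OF upW_mono[OF Yy]] by blast
        then show "x \<in> fst y" using Dy unfolding isD_def by blast
      qed
    qed
    moreover have "?B \<subseteq> snd y" using ub unfolding pair_le_def by auto
    ultimately show "pair_le (?A, ?B) y" unfolding pair_le_def by simp
  qed
qed

lemma glb_DM: assumes F: "F \<subseteq> DMRS U R"
  shows "is_glb (DMRS U R) pair_le F (U \<inter> \<Inter>(fst ` F), upB U R (lowW U R (U \<inter> \<Inter>(snd ` F))))"
proof -
  let ?A = "U \<inter> \<Inter>(fst ` F)"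
  let ?Z = "U \<inter> \<Inter>(snd ` F)"
  let ?B = "upB U R (lowW U R ?Z)"
  have FL: "\<And>e. e \<in> F \<Longrightarrow> (fst e, snd e) \<in> DMRS U R" using F by auto
  have FD: "\<And>e. e \<in> F \<Longrightarrow> isD (fst e) \<and> isU (snd e) \<and> upB U R (upW U R (fst e)) \<subseteq> snd e \<and> fst e \<inter> S = snd e \<inter> S"
    using F DM_iff' by blast
  have BZ: "?B \<subseteq> ?Z"
  proof
    fix x assume "x \<in> ?B"
    then obtain w where "x \<in> U" "(x, w) \<in> R" "Rinv U R w \<subseteq> ?Z" by auto
    moreover then have "x \<in> Rinv U R w" by simp
    ultimately show "x \<in> ?Z" by blast
  qed
  have Uclose: "\<And>D. isU D \<Longrightarrow> D \<subseteq> ?Z \<Longrightarrow> D \<subseteq> ?B"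
  proof
    fix D d assume D: "isU D" "D \<subseteq> ?Z" and d: "d \<in> D"
    then obtain w where w: "(d, w) \<in> R" "upB U R {w} \<subseteq> D" using isU_ex by blast
    have "Rinv U R w \<subseteq> ?Z"
    proof
      fix y assume "y \<in> Rinv U R w"
      then have "y \<in> upB U R {w}" using RD by auto
      then show "y \<in> ?Z" using w D by blast
    qed
    then show "d \<in> ?B" using w RD by auto
  qed
  have inL: "(?A, ?B) \<in> DMRS U R" unfolding DM_iff
  proof (intro conjI)
    show "isD ?A" unfolding isD_def
    proof (intro conjI)
      show "lowB U R (upW U R ?A) \<subseteq> ?A"
      proof
        fix x assume x: "x \<in> lowB U R (upW U R ?A)"
        have "\<And>e. e \<in> F \<Longrightarrow> x \<in> fst e"
        proof -
          fix e assume e: "e \<in> F"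
          have "Rimg U R x \<subseteq> upW U R (fst e)"
          proof
            fix y assume "y \<in> Rimg U R x"
            then have "y \<in> upW U R ?A" using x by auto
            then show "y \<in> upW U R (fst e)" using e by auto
          qed
          then have "x \<in> lowB U R (upW U R (fst e))" using x by simp
          then show "x \<in> fst e" using FD[OF e] unfolding isD_def by blast
        qed
        then show "x \<in> ?A" using x by auto
      qed
    qed auto
    show "isU ?B" by (rule isU_upB)
    have sub: "upB U R (upW U R ?A) \<subseteq> ?Z"
    proof
      fix x assume x: "x \<in> upB U R (upW U R ?A)"
      then obtain w a where xw: "(x, w) \<in> R" and aw: "(a, w) \<in> R" and a: "a \<in> ?A" by auto
      have "\<And>e. e \<in> F \<Longrightarrow> x \<in> snd e" using DM_tri[OF FL _ aw xw] a by blast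
      then show "x \<in> ?Z" using x by auto
    qed
    show "upB U R (upW U R ?A) \<subseteq> ?B" by (rule Uclose[OF isU_upB sub])
    show "?A \<inter> S = ?B \<inter> S"
    proof (intro set_eqI iffI)
      fix s assume s: "s \<in> ?A \<inter> S"
      have sU: "s \<in> U" and ss: "(s, s) \<in> R" using s Rrefl by auto
      have "Rinv U R s \<subseteq> ?Z"
      proof
        fix y assume "y \<in> Rinv U R s"
        then have ys: "(y, s) \<in> R" by simp
        have "\<And>e. e \<in> F \<Longrightarrow> y \<in> snd e" using DM_tri[OF FL _ ss ys] s by blast
        then show "y \<in> ?Z" using ys RD by auto
      qed
      then have "s \<in> ?B" using sU ss by auto
      then show "s \<in> ?B \<inter> S" using s by blast
    next
      fix s assume s: "s \<in> ?B \<inter> S"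
      then have "s \<in> ?Z" using BZ by blast
      then have "\<And>e. e \<in> F \<Longrightarrow> s \<in> fst e" using FD s by blast
      then show "s \<in> ?A \<inter> S" using s BZ by blast
    qed
  qed
  show ?thesis unfolding is_glb_def
  proof (intro conjI ballI impI)
    show "(?A, ?B) \<in> DMRS U R" by (rule inL)
    fix e assume "e \<in> F"
    then show "pair_le (?A, ?B) e" unfolding pair_le_def using BZ by auto
  next
    fix y assume y: "y \<in> DMRS U R" and lb: "\<forall>e\<in>F. pair_le y e"
    have yU: "fst y \<subseteq> U" "snd y \<subseteq> U" using y DM_U[of "fst y" "snd y"] by auto
    have "fst y \<subseteq> ?A" using lb yU unfolding pair_le_def by auto
    moreover have "snd y \<subseteq> ?Z" using lb yU unfolding pair_le_def by auto
    then have "snd y \<subseteq> ?B" using Uclose y DM_iff' by blast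
    ultimately show "pair_le y (?A, ?B)" unfolding pair_le_def by simp
  qed
qed

lemma gen_DM: assumes e: "e \<in> DMRS U R"
  shows "is_lub (DMRS U R) pair_le ({Q c | c. c \<in> fst e} \<union> {T z | z. z \<in> U \<and> upB U R {z} \<subseteq> snd e}) e"
  unfolding is_lub_def
proof (intro conjI ballI impI)
  have eU: "fst e \<subseteq> U" "snd e \<subseteq> U" using e DM_U[of "fst e" "snd e"] by auto
  show "e \<in> DMRS U R" by (rule e)
  fix x assume "x \<in> {Q c | c. c \<in> fst e} \<union> {T z | z. z \<in> U \<and> upB U R {z} \<subseteq> snd e}"
  then show "pair_le x e" using Q_le T_le e eU by blast
next
  fix y assume y: "y \<in> DMRS U R" and ub: "\<forall>x\<in>{Q c | c. c \<in> fst e} \<union> {T z | z. z \<in> U \<and> upB U R {z} \<subseteq> snd e}. pair_le x y"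
  have eU: "fst e \<subseteq> U" "snd e \<subseteq> U" using e DM_U[of "fst e" "snd e"] by auto
  have 1: "fst e \<subseteq> fst y"
  proof
    fix c assume c: "c \<in> fst e"
    then have "pair_le (Q c) y" using ub by blast
    then show "c \<in> fst y" using Q_le[OF _ y] c eU by blast
  qed
  have 2: "snd e \<subseteq> snd y"
  proof
    fix b assume b: "b \<in> snd e"
    have Ue: "isU (snd e)" using e DM_iff' by blast
    obtain w where w: "(b, w) \<in> R" "upB U R {w} \<subseteq> snd e" using isU_ex[OF Ue b] by blast
    have wU: "w \<in> U" using w RD by blast
    then have "pair_le (T w) y" using ub w by blast
    then have "upB U R {w} \<subseteq> snd y" using T_le[OF wU y] by blast
    moreover have "b \<in> upB U R {w}" using w RD by auto
    ultimately show "b \<in> snd y" by blast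
  qed
  show "pair_le e y" unfolding pair_le_def using 1 2 by simp
qed

end

context kcdl begin

lemma demorgan1: assumes a: "a \<in> L" and b: "b \<in> L"
  shows "neg (ljoin L le a b) = lmeet L le (neg a) (neg b)"
proof -
  have jL: "ljoin L le a b \<in> L" using join_in a b by blast
  have "is_glb L le {neg a, neg b} (neg (ljoin L le a b))" unfolding is_glb_def
  proof (intro conjI ballI impI)
    show "neg (ljoin L le a b) \<in> L" using neg_in jL by blast
    fix x assume "x \<in> {neg a, neg b}"
    then show "neg (ljoin L le a b) \<sqsubseteq> x" using neg_anti jL a b join_ub1 join_ub2 by blast
  next
    fix y assume y: "y \<in> L" and lb: "\<forall>x\<in>{neg a, neg b}. y \<sqsubseteq> x"
    have "a \<sqsubseteq> neg y" "b \<sqsubseteq> neg y" using lb neg_swap y a b by auto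
    then have "ljoin L le a b \<sqsubseteq> neg y" using join_least a b neg_in y by blast
    then show "y \<sqsubseteq> neg (ljoin L le a b)" using neg_swap jL y by blast
  qed
  then show ?thesis unfolding lmeet_def using linf_eq by simp
qed

lemma demorgan2: assumes a: "a \<in> L" and b: "b \<in> L"
  shows "neg (lmeet L le a b) = ljoin L le (neg a) (neg b)"
proof -
  have "neg (ljoin L le (neg a) (neg b)) = lmeet L le a b"
    using demorgan1[OF neg_in[OF a] neg_in[OF b]] neg_neg a b by simp
  then have "neg (neg (ljoin L le (neg a) (neg b))) = neg (lmeet L le a b)" by simp
  then show ?thesis using neg_neg join_in neg_in a b by simp
qed

lemma distrib: assumes a: "a \<in> L" and b: "b \<in> L" and c: "c \<in> L"
  shows "lmeet L le a (ljoin L le b c) = ljoin L le (lmeet L le a b) (lmeet L le a c)"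
proof -
  have "lmeet L le a (ljoin L le b c) = lsup L le {lmeet L le a x | x. x \<in> {b, c}}"
    unfolding ljoin_def using dist_inf[OF a, of "{b,c}"] b c by simp
  also have "{lmeet L le a x | x. x \<in> {b, c}} = {lmeet L le a b, lmeet L le a c}" by auto
  finally show ?thesis unfolding ljoin_def .
qed

end

locale rsk = rs +
  assumes cd: "completely_distributive (DMRS U R) pair_le"
  and sp: "spatial (DMRS U R) pair_le"
begin

lemma pl_refl: "a \<in> DMRS U R \<Longrightarrow> pair_le a a" by (simp add: pair_le_def)
lemma pl_antisym: "a \<in> DMRS U R \<Longrightarrow> b \<in> DMRS U R \<Longrightarrow> pair_le a b \<Longrightarrow> pair_le b a \<Longrightarrow> a = b"
  unfolding pair_le_def prod_eq_iff by blast
lemma pl_trans: "a \<in> DMRS U R \<Longrightarrow> b \<in> DMRS U R \<Longrightarrow> c \<in> DMRS U R \<Longrightarrow> pair_le a b \<Longrightarrow> pair_le b c \<Longrightarrow> pair_le a c"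
  unfolding pair_le_def by blast
lemma lub_ex': "A \<subseteq> DMRS U R \<Longrightarrow> \<exists>x. is_lub (DMRS U R) pair_le A x" using lub_DM by blast
lemma glb_ex': "A \<subseteq> DMRS U R \<Longrightarrow> \<exists>x. is_glb (DMRS U R) pair_le A x" using glb_DM by blast
lemma neg_anti': "a \<in> DMRS U R \<Longrightarrow> b \<in> DMRS U R \<Longrightarrow> pair_le a b \<Longrightarrow> pair_le (dm_neg U b) (dm_neg U a)"
  using neg_anti by blast

end

sublocale rsk \<subseteq> K: kcdl "DMRS U R" pair_le "dm_neg U"
  by unfold_locales (fact pl_refl pl_antisym pl_trans lub_ex' glb_ex' cd sp neg_in neg_neg neg_anti')+

context rsk begin

abbreviation "cjiU X \<equiv> completely_join_irreducible (upB U R ` Pow U) (\<subseteq>) X"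

lemma J_class: assumes j: "K.cji j"
  shows "(\<exists>c\<in>U. j = Q c) \<or> (\<exists>z\<in>U. z \<notin> S \<and> j = T z)"
proof -
  have jL: "j \<in> DMRS U R" using K.cji_in[OF j] .
  have jU: "fst j \<subseteq> U" using jL DM_U[of "fst j" "snd j"] by auto
  let ?G = "{Q c | c. c \<in> fst j} \<union> {T z | z. z \<in> U \<and> upB U R {z} \<subseteq> snd j}"
  have G: "?G \<subseteq> DMRS U R" using Q_in T_in jU by blast
  have "j \<in> ?G" using j gen_DM[OF jL] G unfolding completely_join_irreducible_def by blast
  then show ?thesis using jU T_S by blast
qed

lemma gQ: assumes j: "K.cji (Q c)" and c: "c \<in> U" and e: "e \<in> DMRS U R"
  shows "pair_le (K.g (Q c)) e \<longleftrightarrow> c \<in> snd e"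
proof -
  have 1: "pair_le (K.g (Q c)) e \<longleftrightarrow> \<not> pair_le (Q c) (dm_neg U e)" using K.g_le[OF j e] .
  have 2: "pair_le (Q c) (dm_neg U e) \<longleftrightarrow> c \<in> fst (dm_neg U e)" using Q_le[OF c neg_in[OF e]] .
  have 3: "fst (dm_neg U e) = U - snd e" by (simp add: dm_neg_def)
  have 4: "c \<in> fst (dm_neg U e) \<longleftrightarrow> c \<notin> snd e" using 3 c by simp
  show ?thesis unfolding 1 2 4 by blast
qed

lemma gT: assumes j: "K.cji (T z)" and z: "z \<in> U" and e: "e \<in> DMRS U R"
  shows "pair_le (K.g (T z)) e \<longleftrightarrow> upB U R {z} \<inter> fst e \<noteq> {}"
proof -
  have 1: "pair_le (K.g (T z)) e \<longleftrightarrow> \<not> pair_le (T z) (dm_neg U e)" using K.g_le[OF j e] .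
  have 2: "pair_le (T z) (dm_neg U e) \<longleftrightarrow> upB U R {z} \<subseteq> snd (dm_neg U e)" using T_le[OF z neg_in[OF e]] .
  have 3: "snd (dm_neg U e) = U - fst e" by (simp add: dm_neg_def)
  have 4: "upB U R {z} \<subseteq> U" by auto
  have 5: "upB U R {z} \<subseteq> snd (dm_neg U e) \<longleftrightarrow> upB U R {z} \<inter> fst e = {}" unfolding 3 using 4 by blast
  show ?thesis unfolding 1 2 5 by blast
qed

lemma fst_T: "z \<notin> S \<Longrightarrow> fst (T z) = {}" unfolding T_def by simp
lemma snd_T: "snd (T z) = upB U R {z}" unfolding T_def by simp
lemma fst_Q: "fst (Q c) = lowB U R (Rimg U R c)" unfolding Q_def by simp
lemma snd_Q: "snd (Q c) = upB U R (Rimg U R c)" unfolding Q_def by simp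

lemma gT_Q: assumes j: "K.cji (T y)" and y: "y \<in> U" and yS: "y \<notin> S"
  shows "\<exists>b. (b, y) \<in> R \<and> K.g (T y) = Q b \<and> (\<forall>t. (t, y) \<in> R \<longrightarrow> Rimg U R b \<subseteq> Rimg U R t)"
proof -
  have gj: "K.cji (K.g (T y))" using K.g_cji[OF j] .
  have gL: "K.g (T y) \<in> DMRS U R" using K.g_in .
  obtain c where c: "c \<in> U" "K.g (T y) = Q c"
  proof -
    from J_class[OF gj] show ?thesis
    proof
      assume "\<exists>c\<in>U. K.g (T y) = Q c"
      then show ?thesis using that by blast
    next
      assume "\<exists>z\<in>U. z \<notin> S \<and> K.g (T y) = T z"
      then obtain w where w: "w \<in> U" "w \<notin> S" "K.g (T y) = T w" by blast
      have "pair_le (K.g (T y)) (T w)" using w pl_refl gL by simp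
      then have "upB U R {y} \<inter> fst (T w) \<noteq> {}" using gT[OF j y T_in[OF w(1)]] by blast
      then show ?thesis using fst_T[OF w(2)] by simp
    qed
  qed
  have "pair_le (K.g (T y)) (Q c)" using c pl_refl Q_in by simp
  then have "upB U R {y} \<inter> fst (Q c) \<noteq> {}" using gT[OF j y Q_in[OF c(1)]] by blast
  then obtain b where b: "(b, y) \<in> R" "b \<in> U" "Rimg U R b \<subseteq> Rimg U R c" unfolding fst_Q by auto
  have min: "\<And>t. (t, y) \<in> R \<Longrightarrow> Rimg U R c \<subseteq> Rimg U R t"
  proof -
    fix t assume ty: "(t, y) \<in> R"
    then have tU: "t \<in> U" using RD by blast
    have "t \<in> upB U R {y} \<inter> fst (Q t)" unfolding fst_Q using ty tU RD by auto
    then have "pair_le (K.g (T y)) (Q t)" using gT[OF j y Q_in[OF tU]] by blast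
    then have "c \<in> fst (Q t)" using c Q_le[OF c(1) Q_in[OF tU]] by simp
    then show "Rimg U R c \<subseteq> Rimg U R t" unfolding fst_Q by simp
  qed
  have bc: "Rimg U R b = Rimg U R c" using min[OF b(1)] b(3) by blast
  then have "Q b = Q c" unfolding Q_def by simp
  then show ?thesis using b c min bc by (intro exI[of _ b]) auto
qed

lemma gQ_T: assumes j: "K.cji (Q c)" and c: "c \<in> U"
  shows "\<exists>w. (c, w) \<in> R \<and> K.g (Q c) = T w"
proof -
  have gL: "K.g (Q c) \<in> DMRS U R" using K.g_in .
  have "c \<in> snd (K.g (Q c))" using gQ[OF j c gL] pl_refl[OF gL] by blast
  moreover have "isU (snd (K.g (Q c)))" using gL DM_iff' by blast
  ultimately obtain w where w: "(c, w) \<in> R" "upB U R {w} \<subseteq> snd (K.g (Q c))" using isU_ex by blast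
  have wU: "w \<in> U" using w RD by blast
  have 1: "pair_le (T w) (K.g (Q c))" using T_le[OF wU gL] w by blast
  have "c \<in> snd (T w)" unfolding snd_T using w c by auto
  then have 2: "pair_le (K.g (Q c)) (T w)" using gQ[OF j c T_in[OF wU]] by blast
  show ?thesis using pl_antisym[OF gL T_in[OF wU] 2 1] w by blast
qed

lemma gQ_le_Q: assumes j: "K.cji (Q c)" and c: "c \<in> U" shows "pair_le (K.g (Q c)) (Q c)"
proof -
  have "c \<in> snd (Q c)" unfolding snd_Q using c Rrefl self_Ri by auto
  then show ?thesis using gQ[OF j c Q_in[OF c]] by blast
qed

lemma isU_Un: "(\<And>C. C \<in> F \<Longrightarrow> isU C) \<Longrightarrow> isU (\<Union>F)"
proof (rule isU_intro)
  assume F: "\<And>C. C \<in> F \<Longrightarrow> isU C"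
  show "\<Union>F \<subseteq> U" using F unfolding isU_def by blast
  fix b assume "b \<in> \<Union>F"
  then obtain C where C: "C \<in> F" "b \<in> C" by blast
  then obtain w where "(b, w) \<in> R" "upB U R {w} \<subseteq> C" using isU_ex F by blast
  then show "\<exists>w. (b, w) \<in> R \<and> upB U R {w} \<subseteq> \<Union>F" using C by blast
qed

lemma lubU: assumes F: "F \<subseteq> upB U R ` Pow U" shows "is_lub (upB U R ` Pow U) (\<subseteq>) F (\<Union>F)"
proof -
  have "\<Union>F \<in> upB U R ` Pow U" using isU_Un F unfolding isU_img by blast
  then show ?thesis unfolding is_lub_def by blast
qed

lemma lubU_eq: assumes F: "F \<subseteq> upB U R ` Pow U" and l: "is_lub (upB U R ` Pow U) (\<subseteq>) F X" shows "X = \<Union>F"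
  using lubU[OF F] l unfolding is_lub_def by blast

lemma cjiT: assumes z: "z \<in> U" shows "K.cji (T z) \<longleftrightarrow> cjiU (upB U R {z})"
proof
  assume c: "cjiU (upB U R {z})"
  show "K.cji (T z)" unfolding completely_join_irreducible_def
  proof (intro conjI allI impI)
    show "T z \<in> DMRS U R" using T_in[OF z] .
    fix T' assume T': "T' \<subseteq> DMRS U R" and l: "is_lub (DMRS U R) pair_le T' (T z)"
    have "T z = (lowB U R (upW U R (\<Union>(fst ` T'))), \<Union>(snd ` T'))"
      using K.lub_unique[OF l lub_DM[OF T']] .
    then have eq: "upB U R {z} = \<Union>(snd ` T')" unfolding T_def by simp
    have sT: "snd ` T' \<subseteq> upB U R ` Pow U" unfolding isU_img using T' DM_iff' by blast
    have "is_lub (upB U R ` Pow U) (\<subseteq>) (snd ` T') (upB U R {z})" using lubU[OF sT] eq by simp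
    then have "upB U R {z} \<in> snd ` T'" using c sT unfolding completely_join_irreducible_def by blast
    then obtain t where t: "t \<in> T'" "snd t = upB U R {z}" by blast
    have tL: "t \<in> DMRS U R" using t T' by blast
    have 1: "pair_le (T z) t" using T_le[OF z tL] t by simp
    have 2: "pair_le t (T z)" using l t unfolding is_lub_def by blast
    have "t = T z" using pl_antisym[OF tL T_in[OF z] 2 1] .
    then show "T z \<in> T'" using t by simp
  qed
next
  assume c: "K.cji (T z)"
  have TL: "T z \<in> DMRS U R" using T_in[OF z] .
  show "cjiU (upB U R {z})" unfolding completely_join_irreducible_def
  proof (intro conjI allI impI)
    show "upB U R {z} \<in> upB U R ` Pow U" using z by (intro image_eqI[of _ _ "{z}"]) auto
    fix F assume F: "F \<subseteq> upB U R ` Pow U" and l: "is_lub (upB U R ` Pow U) (\<subseteq>) F (upB U R {z})"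
    have eq: "upB U R {z} = \<Union>F" using lubU_eq[OF F l] .
    have FU: "\<And>C. C \<in> F \<Longrightarrow> isU C" using F unfolding isU_img by blast
    show "upB U R {z} \<in> F"
    proof (cases "z \<in> S")
      case True
      have "z \<in> upB U R {z}" using z Rrefl by auto
      then obtain C where C: "C \<in> F" "z \<in> C" using eq by blast
      then obtain w where w: "(z, w) \<in> R" "upB U R {w} \<subseteq> C" using isU_ex FU by blast
      have "w = z" using S_R[OF True] w by blast
      then have "C = upB U R {z}" using w C eq by blast
      then show ?thesis using C by simp
    next
      case False
      have TzL: "({}, upB U R {z}) \<in> DMRS U R" using TL fst_T[OF False] unfolding T_def using False by simp
      then have D0: "isD {}" and S0: "upB U R {z} \<inter> S = {}" unfolding DM_iff by auto
      let ?T = "(\<lambda>C. ({} :: 'a set, C)) ` F"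
      have TsL: "?T \<subseteq> DMRS U R"
      proof
        fix e assume "e \<in> ?T"
        then obtain C where C: "C \<in> F" "e = ({}, C)" by blast
        have "C \<subseteq> upB U R {z}" using eq C by blast
        then have "C \<inter> S = {}" using S0 by blast
        moreover have "upB U R (upW U R {}) \<subseteq> C" by auto
        ultimately show "e \<in> DMRS U R" unfolding C(2) DM_iff using D0 FU[OF C(1)] by simp
      qed
      have l0: "lowB U R (upW U R {}) = {}" using D0 unfolding isD_def by auto
      have "(lowB U R (upW U R (\<Union>(fst ` ?T))), \<Union>(snd ` ?T)) = T z"
        unfolding T_def using False l0 eq by auto
      then have "is_lub (DMRS U R) pair_le ?T (T z)" using lub_DM[OF TsL] by simp
      then have "T z \<in> ?T" using c TsL unfolding completely_join_irreducible_def by blast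
      then show ?thesis unfolding T_def using False by auto
    qed
  qed
qed

end

context rsk begin

definition P2 where "P2 \<longleftrightarrow>
    (\<forall>x \<in> U - singletons U R. \<forall>y \<in> U - singletons U R.
       completely_join_irreducible (upB U R ` Pow U) (\<subseteq>) (upB U R {x}) \<longrightarrow>
       completely_join_irreducible (upB U R ` Pow U) (\<subseteq>) (upB U R {y}) \<longrightarrow>
       (\<exists>u \<in> U. upB U R {x} \<subseteq> upB U R {u} \<and> upB U R {y} \<subseteq> upB U R {u}) \<longrightarrow>
       (\<exists>z \<in> U. completely_join_irreducible (upB U R ` Pow U) (\<subseteq>) (upB U R {z}) \<and>
          upB U R {x} \<subseteq> upB U R {z} \<and> upB U R {y} \<subseteq> upB U R {z}))"

lemma upB_mem: "v \<in> upB U R {x} \<longleftrightarrow> (v, x) \<in> R" using RD by auto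

lemma upB_sub_iff: "upB U R {y} \<subseteq> upB U R {w} \<longleftrightarrow> (\<forall>t. (t, y) \<in> R \<longrightarrow> (t, w) \<in> R)"
  using upB_mem by blast

lemma crit_P2: "K.Crit \<Longrightarrow> P2"
  unfolding P2_def
proof (intro ballI impI)
  assume C: K.Crit
  fix x y assume x: "x \<in> U - S" and y: "y \<in> U - S"
    and cx: "cjiU (upB U R {x})" and cy: "cjiU (upB U R {y})"
    and ex_u: "\<exists>u\<in>U. upB U R {x} \<subseteq> upB U R {u} \<and> upB U R {y} \<subseteq> upB U R {u}"
  show "\<exists>z\<in>U. cjiU (upB U R {z}) \<and> upB U R {x} \<subseteq> upB U R {z} \<and> upB U R {y} \<subseteq> upB U R {z}"
  proof (rule ccontr)
    assume H: "\<not> ?thesis"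
    have xU: "x \<in> U" and xS: "x \<notin> S" using x by auto
    have yU: "y \<in> U" and yS: "y \<notin> S" using y by auto
    have jx: "K.cji (T x)" using cjiT[OF xU] cx by blast
    have jy: "K.cji (T y)" using cjiT[OF yU] cy by blast
    obtain b where b: "(b, y) \<in> R" "K.g (T y) = Q b" and bmin: "\<And>t. (t, y) \<in> R \<Longrightarrow> Rimg U R b \<subseteq> Rimg U R t"
      using gT_Q[OF jy yU yS] by blast
    have bU: "b \<in> U" using b RD by blast
    have jb: "K.cji (Q b)" using K.g_cji[OF jy] b by simp
    have gQb: "K.g (Q b) = T y" using K.g_g[OF jy] b by simp
    obtain u where u: "u \<in> U" "upB U R {x} \<subseteq> upB U R {u}" "upB U R {y} \<subseteq> upB U R {u}" using ex_u by blast
    have bu: "(b, u) \<in> R" using u(3) b unfolding upB_sub_iff by blast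
    have mk: "pair_le (T x) (Q b)"
      unfolding T_le[OF xU Q_in[OF bU]] snd_Q
    proof
      fix v assume "v \<in> upB U R {x}"
      then have vu: "(v, u) \<in> R" using u(2) upB_mem by blast
      then show "v \<in> upB U R (Rimg U R b)" using bu RD by auto
    qed
    have yw: "\<And>w c. (c, w) \<in> R \<Longrightarrow> Rimg U R c \<subseteq> Rimg U R b \<Longrightarrow> upB U R {y} \<subseteq> upB U R {w}"
      unfolding upB_sub_iff using bmin Ri_sub by blast
    have Hz: "\<And>w. w \<in> U \<Longrightarrow> K.cji (T w) \<Longrightarrow> upB U R {x} \<subseteq> upB U R {w} \<Longrightarrow> upB U R {y} \<subseteq> upB U R {w} \<Longrightarrow> False"
      using H cjiT by blast
    from C jx jb mk have D: "pair_le (K.g (T x)) (Q b) \<or> pair_le (K.g (T x)) (K.g (Q b)) \<or>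
       (\<exists>n. K.cji n \<and> pair_le (T x) n \<and> n \<noteq> T x \<and> pair_le n (Q b) \<and> pair_le n (K.g (T x)) \<and>
          (pair_le (K.g n) (Q b) \<or> pair_le (K.g n) (K.g (Q b))))"
      unfolding K.Crit_def by blast
    show False
    proof -
      have not1: "\<not> pair_le (K.g (T x)) (Q b)"
      proof
        assume "pair_le (K.g (T x)) (Q b)"
        then have "upB U R {x} \<inter> fst (Q b) \<noteq> {}" using gT[OF jx xU Q_in[OF bU]] by blast
        then obtain v where v: "(v, x) \<in> R" "Rimg U R v \<subseteq> Rimg U R b" unfolding fst_Q by auto
        have "upB U R {y} \<subseteq> upB U R {x}" using yw[OF v] .
        then show False using Hz[OF xU jx] by blast
      qed
      have not2: "\<not> pair_le (K.g (T x)) (K.g (Q b))"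
      proof
        assume "pair_le (K.g (T x)) (K.g (Q b))"
        then have "upB U R {x} \<inter> fst (T y) \<noteq> {}" using gT[OF jx xU T_in[OF yU]] gQb by simp
        then show False using fst_T[OF yS] by simp
      qed
      have not3: "\<not> (\<exists>n. K.cji n \<and> pair_le (T x) n \<and> n \<noteq> T x \<and> pair_le n (Q b) \<and> pair_le n (K.g (T x)) \<and>
          (pair_le (K.g n) (Q b) \<or> pair_le (K.g n) (K.g (Q b))))"
      proof
        assume "\<exists>n. K.cji n \<and> pair_le (T x) n \<and> n \<noteq> T x \<and> pair_le n (Q b) \<and> pair_le n (K.g (T x)) \<and>
          (pair_le (K.g n) (Q b) \<or> pair_le (K.g n) (K.g (Q b)))"
        then obtain n where n: "K.cji n" "pair_le (T x) n" "pair_le n (Q b)" "pair_le n (K.g (T x))"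
          "pair_le (K.g n) (Q b) \<or> pair_le (K.g n) (K.g (Q b))" by blast
        from J_class[OF n(1)] show False
        proof
          assume "\<exists>c\<in>U. n = Q c"
          then obtain c where c: "c \<in> U" "n = Q c" by blast
          have cb: "Rimg U R c \<subseteq> Rimg U R b" using n(3) c Q_le[OF c(1) Q_in[OF bU]] unfolding fst_Q by simp
          have xgn: "pair_le (T x) (K.g n)" using K.g_swap[OF n(1) jx] n(4) by blast
          have jc: "K.cji (Q c)" using n c by simp
          obtain w where w: "(c, w) \<in> R" "K.g (Q c) = T w" using gQ_T[OF jc c(1)] by blast
          have wU: "w \<in> U" using w RD by blast
          have jw: "K.cji (T w)" using K.g_cji[OF jc] w by simp
          have "upB U R {x} \<subseteq> upB U R {w}" using xgn c w T_le[OF xU T_in[OF wU]] snd_T by simp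
          moreover have "upB U R {y} \<subseteq> upB U R {w}" using yw[OF w(1) cb] .
          ultimately show False using Hz[OF wU jw] by blast
        next
          assume "\<exists>z\<in>U. z \<notin> S \<and> n = T z"
          then obtain w where w: "w \<in> U" "w \<notin> S" "n = T w" by blast
          have jw: "K.cji (T w)" using n w by simp
          have xw: "upB U R {x} \<subseteq> upB U R {w}" using n(2) w T_le[OF xU T_in[OF w(1)]] snd_T by simp
          from n(5) show False
          proof
            assume "pair_le (K.g n) (Q b)"
            then have "upB U R {w} \<inter> fst (Q b) \<noteq> {}" using gT[OF jw w(1) Q_in[OF bU]] w by simp
            then obtain a where a: "(a, w) \<in> R" "Rimg U R a \<subseteq> Rimg U R b" unfolding fst_Q by auto
            have "upB U R {y} \<subseteq> upB U R {w}" using yw[OF a] .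
            then show False using Hz[OF w(1) jw xw] by blast
          next
            assume "pair_le (K.g n) (K.g (Q b))"
            then have "pair_le (Q b) n" using K.g_iff[OF n(1) jb] by blast
            then have "b \<in> fst (T w)" using Q_le[OF bU T_in[OF w(1)]] w by simp
            then show False using fst_T[OF w(2)] by simp
          qed
        qed
      qed
      show False using D not1 not2 not3 by blast
    qed
  qed
qed

lemma P2_crit: "P2 \<Longrightarrow> K.Crit"
  unfolding K.Crit_def
proof (intro allI impI)
  assume P: P2
  fix m k assume m: "K.cji m" and k: "K.cji k" and mk: "pair_le m k"
  have mL: "m \<in> DMRS U R" using K.cji_in[OF m] .
  have kL: "k \<in> DMRS U R" using K.cji_in[OF k] .
  have gL: "\<And>j. K.g j \<in> DMRS U R" by (rule K.g_in)
  show "pair_le (K.g m) k \<or> pair_le (K.g m) (K.g k) \<or>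
     (\<exists>n. K.cji n \<and> pair_le m n \<and> n \<noteq> m \<and> pair_le n k \<and> pair_le n (K.g m) \<and>
        (pair_le (K.g n) k \<or> pair_le (K.g n) (K.g k)))"
  proof (cases "\<exists>c\<in>U. m = Q c")
    case True
    then obtain c where c: "c \<in> U" "m = Q c" by blast
    have "pair_le (K.g m) m" using gQ_le_Q[of c] m c by simp
    then have "pair_le (K.g m) k" using pl_trans[OF gL mL kL] mk by blast
    then show ?thesis by blast
  next
    case False
    then obtain y where y: "y \<in> U" "y \<notin> S" "m = T y" using J_class[OF m] by blast
    have jy: "K.cji (T y)" using m y by simp
    obtain b where b: "(b, y) \<in> R" "K.g (T y) = Q b" and bmin: "\<And>t. (t, y) \<in> R \<Longrightarrow> Rimg U R b \<subseteq> Rimg U R t"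
      using gT_Q[OF jy y(1) y(2)] by blast
    have bU: "b \<in> U" using b RD by blast
    have gk: "K.cji (K.g k)" using K.g_cji[OF k] .
    show ?thesis
    proof (cases "\<exists>d\<in>U. K.g k = Q d")
      case True
      then obtain d where d: "d \<in> U" "K.g k = Q d" by blast
      have "pair_le (K.g (K.g k)) (K.g k)" using gQ_le_Q[of d] gk d by simp
      then have kgk: "pair_le k (K.g k)" using K.g_g[OF k] by simp
      show ?thesis
      proof (cases "k = m")
        case True
        then show ?thesis using pl_refl[OF gL] by blast
      next
        case False
        have "pair_le (K.g k) (K.g m)" using K.g_anti[OF m k mk] .
        then have "pair_le k (K.g m)" using pl_trans[OF kL gL gL] kgk by blast
        then show ?thesis using k mk False pl_refl[OF kL] pl_refl[OF gL] by blast
      qed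
    next
      case False
      then obtain w where w: "w \<in> U" "w \<notin> S" "K.g k = T w" using J_class[OF gk] by blast
      have jw: "K.cji (T w)" using gk w by simp
      obtain c where c: "(c, w) \<in> R" "K.g (T w) = Q c" and cmin: "\<And>t. (t, w) \<in> R \<Longrightarrow> Rimg U R c \<subseteq> Rimg U R t"
        using gT_Q[OF jw w(1) w(2)] by blast
      have cU: "c \<in> U" using c RD by blast
      have kc: "k = Q c" using K.g_g[OF k] w c by simp
      have cw: "cjiU (upB U R {w})" using cjiT[OF w(1)] jw by blast
      have cy: "cjiU (upB U R {y})" using cjiT[OF y(1)] jy by blast
      have "upB U R {y} \<subseteq> snd (Q c)" using mk kc y T_le[OF y(1) Q_in[OF cU]] by simp
      moreover have "b \<in> upB U R {y}" using b bU by auto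
      ultimately have "b \<in> upB U R (Rimg U R c)" unfolding snd_Q by blast
      then obtain u where u: "(b, u) \<in> R" "(c, u) \<in> R" by auto
      have uU: "u \<in> U" using u RD by blast
      have yu: "upB U R {y} \<subseteq> upB U R {u}" unfolding upB_sub_iff using bmin u Ri_sub by blast
      have wu: "upB U R {w} \<subseteq> upB U R {u}" unfolding upB_sub_iff using cmin u Ri_sub by blast
      have yS': "y \<in> U - S" and wS': "w \<in> U - S" using y w by auto
      have exu: "\<exists>u\<in>U. upB U R {y} \<subseteq> upB U R {u} \<and> upB U R {w} \<subseteq> upB U R {u}" using uU yu wu by blast
      have "\<exists>z\<in>U. cjiU (upB U R {z}) \<and> upB U R {y} \<subseteq> upB U R {z} \<and> upB U R {w} \<subseteq> upB U R {z}"
        using P[unfolded P2_def, rule_format, OF yS' wS' cy cw exu] .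
      then obtain z where z: "z \<in> U" "cjiU (upB U R {z})" "upB U R {y} \<subseteq> upB U R {z}" "upB U R {w} \<subseteq> upB U R {z}"
        by blast
      have jz: "K.cji (T z)" using cjiT[OF z(1)] z(2) by blast
      have cz: "(c, z) \<in> R" using z(4) c upB_mem by blast
      have bz: "(b, z) \<in> R" using z(3) b upB_mem by blast
      have gzk: "pair_le (K.g (T z)) k"
      proof -
        have "c \<in> upB U R {z} \<inter> fst (Q c)" unfolding fst_Q using cz cU by auto
        then show ?thesis using gT[OF jz z(1) Q_in[OF cU]] kc by blast
      qed
      show ?thesis
      proof (cases "T z = m")
        case True
        then have "K.g m = K.g (T z)" by simp
        then show ?thesis using gzk by simp
      next
        case False
        have 1: "pair_le m (T z)" using T_le[OF y(1) T_in[OF z(1)]] y z snd_T by simp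
        have 2: "pair_le (T z) k" unfolding kc T_le[OF z(1) Q_in[OF cU]] snd_Q
        proof
          fix v assume "v \<in> upB U R {z}"
          then have "(v, z) \<in> R" using upB_mem by blast
          then show "v \<in> upB U R (Rimg U R c)" using cz RD by auto
        qed
        have 3: "pair_le (T z) (K.g m)" unfolding y(3) b(2) T_le[OF z(1) Q_in[OF bU]] snd_Q
        proof
          fix v assume "v \<in> upB U R {z}"
          then have "(v, z) \<in> R" using upB_mem by blast
          then show "v \<in> upB U R (Rimg U R b)" using bz RD by auto
        qed
        show ?thesis using jz 1 False 2 3 gzk by blast
      qed
    qed
  qed
qed

lemma crit_iff: "K.Crit \<longleftrightarrow> P2" using crit_P2 P2_crit by blast

lemma pl_intro: "fst p \<subseteq> fst q \<Longrightarrow> snd p \<subseteq> snd q \<Longrightarrow> pair_le p q"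
  by (simp add: pair_le_def)

lemma bot_in: "({}, {}) \<in> DMRS U R"
  unfolding DM_iff
proof (intro conjI)
  show "isD {}" unfolding isD_def
  proof (intro conjI)
    show "lowB U R (upW U R {}) \<subseteq> {}"
    proof
      fix x assume x: "x \<in> lowB U R (upW U R {})"
      then have "x \<in> Rimg U R x" "Rimg U R x \<subseteq> upW U R {}" using self_Ri by auto
      then show "x \<in> {}" by auto
    qed
  qed auto
  show "isU {}" unfolding isU_def by auto
qed auto

lemma top_in: "(U, U) \<in> DMRS U R"
  unfolding DM_iff
proof (intro conjI)
  show "isD U" unfolding isD_def by auto
  show "isU U" unfolding isU_def
  proof (intro conjI)
    show "U \<subseteq> upB U R (lowW U R U)"
    proof
      fix x assume x: "x \<in> U"
      have "x \<in> lowW U R U" using x RD by auto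
      then show "x \<in> upB U R (lowW U R U)" using x Rrefl by auto
    qed
  qed auto
qed auto

lemma kleene: "kleene_algebra (DMRS U R) pair_le (dm_neg U) ({}, {}) (U, U)"
  unfolding kleene_algebra_def
proof (intro conjI)
  show "\<forall>a\<in>DMRS U R. pair_le a a" using pl_refl by blast
  show "\<forall>a\<in>DMRS U R. \<forall>b\<in>DMRS U R. pair_le a b \<and> pair_le b a \<longrightarrow> a = b"
  proof (intro ballI impI)
    fix a b assume "a \<in> DMRS U R" "b \<in> DMRS U R" "pair_le a b \<and> pair_le b a"
    then show "a = b" using pl_antisym by blast
  qed
  show "\<forall>a\<in>DMRS U R. \<forall>b\<in>DMRS U R. \<forall>c\<in>DMRS U R. pair_le a b \<and> pair_le b c \<longrightarrow> pair_le a c"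
  proof (intro ballI impI)
    fix a b c assume "a \<in> DMRS U R" "b \<in> DMRS U R" "c \<in> DMRS U R" "pair_le a b \<and> pair_le b c"
    then show "pair_le a c" using pl_trans by blast
  qed
  show "\<forall>a\<in>DMRS U R. \<forall>b\<in>DMRS U R. (\<exists>x. is_lub (DMRS U R) pair_le {a, b} x) \<and> (\<exists>x. is_glb (DMRS U R) pair_le {a, b} x)"
  proof (intro ballI conjI)
    fix a b assume a: "a \<in> DMRS U R" and b: "b \<in> DMRS U R"
    have ab: "{a, b} \<subseteq> DMRS U R" using a b by blast
    show "\<exists>x. is_lub (DMRS U R) pair_le {a, b} x" by (rule lub_ex'[OF ab])
    show "\<exists>x. is_glb (DMRS U R) pair_le {a, b} x" by (rule glb_ex'[OF ab])
  qed
  show "({}, {}) \<in> DMRS U R" by (rule bot_in)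
  show "(U, U) \<in> DMRS U R" by (rule top_in)
  show "\<forall>a\<in>DMRS U R. pair_le ({}, {}) a \<and> pair_le a (U, U)"
  proof
    fix a assume a: "a \<in> DMRS U R"
    have "fst a \<subseteq> U" "snd a \<subseteq> U" using a DM_U[of "fst a" "snd a"] by auto
    then show "pair_le ({}, {}) a \<and> pair_le a (U, U)" unfolding pair_le_def by simp
  qed
  show "\<forall>a\<in>DMRS U R. \<forall>b\<in>DMRS U R. \<forall>c\<in>DMRS U R. lmeet (DMRS U R) pair_le a (ljoin (DMRS U R) pair_le b c) =
        ljoin (DMRS U R) pair_le (lmeet (DMRS U R) pair_le a b) (lmeet (DMRS U R) pair_le a c)"
  proof (intro ballI)
    fix a b c assume a: "a \<in> DMRS U R" and b: "b \<in> DMRS U R" and c: "c \<in> DMRS U R"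
    show "lmeet (DMRS U R) pair_le a (ljoin (DMRS U R) pair_le b c) =
        ljoin (DMRS U R) pair_le (lmeet (DMRS U R) pair_le a b) (lmeet (DMRS U R) pair_le a c)"
      by (rule K.distrib[OF a b c])
  qed
  show "\<forall>a\<in>DMRS U R. dm_neg U a \<in> DMRS U R \<and> dm_neg U (dm_neg U a) = a"
  proof
    fix a assume a: "a \<in> DMRS U R"
    show "dm_neg U a \<in> DMRS U R \<and> dm_neg U (dm_neg U a) = a" using neg_in[OF a] neg_neg[OF a] by blast
  qed
  show "\<forall>a\<in>DMRS U R. \<forall>b\<in>DMRS U R. dm_neg U (ljoin (DMRS U R) pair_le a b) = lmeet (DMRS U R) pair_le (dm_neg U a) (dm_neg U b)"
  proof (intro ballI)
    fix a b assume a: "a \<in> DMRS U R" and b: "b \<in> DMRS U R"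
    show "dm_neg U (ljoin (DMRS U R) pair_le a b) = lmeet (DMRS U R) pair_le (dm_neg U a) (dm_neg U b)"
      by (rule K.demorgan1[OF a b])
  qed
  show "\<forall>a\<in>DMRS U R. \<forall>b\<in>DMRS U R. dm_neg U (lmeet (DMRS U R) pair_le a b) = ljoin (DMRS U R) pair_le (dm_neg U a) (dm_neg U b)"
  proof (intro ballI)
    fix a b assume a: "a \<in> DMRS U R" and b: "b \<in> DMRS U R"
    show "dm_neg U (lmeet (DMRS U R) pair_le a b) = ljoin (DMRS U R) pair_le (dm_neg U a) (dm_neg U b)"
      by (rule K.demorgan2[OF a b])
  qed
  show "\<forall>a\<in>DMRS U R. \<forall>b\<in>DMRS U R. pair_le (lmeet (DMRS U R) pair_le a (dm_neg U a)) (ljoin (DMRS U R) pair_le b (dm_neg U b))"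
  proof (intro ballI)
    fix a b assume a: "a \<in> DMRS U R" and b: "b \<in> DMRS U R"
    let ?m = "lmeet (DMRS U R) pair_le a (dm_neg U a)"
    let ?j = "ljoin (DMRS U R) pair_le b (dm_neg U b)"
    have na: "dm_neg U a \<in> DMRS U R" using neg_in a by blast
    have nb: "dm_neg U b \<in> DMRS U R" using neg_in b by blast
    have mL: "?m \<in> DMRS U R" using K.meet_in[OF a na] .
    have m1: "pair_le ?m a" using K.meet_lb1[OF a na] .
    have m2: "pair_le ?m (dm_neg U a)" using K.meet_lb2[OF a na] .
    have j1: "pair_le b ?j" using K.join_ub1[OF b nb] .
    have j2: "pair_le (dm_neg U b) ?j" using K.join_ub2[OF b nb] .
    have asub: "fst a \<subseteq> snd a" using DM_sub[of "fst a" "snd a"] a by simp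
    have bsub: "fst b \<subseteq> snd b" using DM_sub[of "fst b" "snd b"] b by simp
    have "fst ?m \<subseteq> fst a \<inter> (U - snd a)" using m1 m2 unfolding pair_le_def dm_neg_def by auto
    then have f: "fst ?m = {}" using asub by blast
    have "snd b \<union> (U - fst b) \<subseteq> snd ?j" using j1 j2 unfolding pair_le_def dm_neg_def by auto
    then have s: "U \<subseteq> snd ?j" using bsub by blast
    have "snd ?m \<subseteq> U" using mL DM_U[of "fst ?m" "snd ?m"] by simp
    then show "pair_le ?m ?j" using f s pl_intro[of ?m ?j] by blast
  qed
qed

lemma main: "nelson_algebra (DMRS U R) pair_le (dm_neg U) ({}, {}) (U, U) \<longleftrightarrow> P2"
proof
  assume N: "nelson_algebra (DMRS U R) pair_le (dm_neg U) ({}, {}) (U, U)"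
  then have "K.Crit" using K.nelson_imp_crit unfolding nelson_algebra_def by blast
  then show P2 using crit_iff by blast
next
  assume P: P2
  then have C: K.Crit using crit_iff by blast
  show "nelson_algebra (DMRS U R) pair_le (dm_neg U) ({}, {}) (U, U)" unfolding nelson_algebra_def
  proof (intro conjI ballI)
    show "kleene_algebra (DMRS U R) pair_le (dm_neg U) ({}, {}) (U, U)" by (rule kleene)
    fix a b assume a: "a \<in> DMRS U R" and b: "b \<in> DMRS U R"
    have "ljoin (DMRS U R) pair_le (dm_neg U a) b \<in> DMRS U R" using K.join_in neg_in a b by blast
    then show "\<exists>x. is_rpc (DMRS U R) pair_le a (ljoin (DMRS U R) pair_le (dm_neg U a) b) x"
      using K.imp_is_rpc a by blast
  next
    fix a b c assume a: "a \<in> DMRS U R" and b: "b \<in> DMRS U R" and c: "c \<in> DMRS U R"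
    show "nelson_imp (DMRS U R) pair_le (dm_neg U) (lmeet (DMRS U R) pair_le a b) c =
          nelson_imp (DMRS U R) pair_le (dm_neg U) a (nelson_imp (DMRS U R) pair_le (dm_neg U) b c)"
      using K.crit_imp_nelson[OF C a b c] .
  qed
qed

end

theorem mainTheorem1:
  fixes U :: "'a set" and R :: "('a \<times> 'a) set"
  assumes "R \<subseteq> U \<times> U"
    and "refl_on U R"
    and "completely_distributive (DMRS U R) pair_le"
    and "spatial (DMRS U R) pair_le"
  shows "nelson_algebra (DMRS U R) pair_le (dm_neg U) ({}, {}) (U, U) \<longleftrightarrow>
    (\<forall>x \<in> U - singletons U R. \<forall>y \<in> U - singletons U R.
       completely_join_irreducible (upB U R ` Pow U) (\<subseteq>) (upB U R {x}) \<longrightarrow>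
       completely_join_irreducible (upB U R ` Pow U) (\<subseteq>) (upB U R {y}) \<longrightarrow>
       (\<exists>u \<in> U. upB U R {x} \<subseteq> upB U R {u} \<and> upB U R {y} \<subseteq> upB U R {u}) \<longrightarrow>
       (\<exists>z \<in> U. completely_join_irreducible (upB U R ` Pow U) (\<subseteq>) (upB U R {z}) \<and>
          upB U R {x} \<subseteq> upB U R {z} \<and> upB U R {y} \<subseteq> upB U R {z}))"
proof -
  interpret rsk U R
    unfolding rsk_def rs_def rsk_axioms_def using assms by blast
  show ?thesis using main unfolding P2_def .
qed

end
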